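(* Let $A,B$ be idempotent $\Gamma$-graded rings and ${}_AP_B$, ${}_BQ_A$ graded bimodules unital on both sides, such that there is a graded Morita context $(A,B,P,Q,\mu,\nu)$ with surjective trace maps. Let ${}_AK$ and ${}_BL$ be unital torsion-free graded modules. Then: (1) The map $\varphi:P\otimes_B B\cdot\mathrm{HOM}_A(P,K)\to A\cdot\mathrm{HOM}_A(A,K)$ given by $\varphi(p\otimes f)(x)=f(xp)=xf(p)$ ($p\in P$, $f\in B\cdot\mathrm{HOM}_A(P,K)$, $x\in A$) is a graded epimorphism of degree $e$ of graded left $A$-modules with torsion kernel. (2) The map $\gamma:B\otimes_BL\to B\cdot\mathrm{HOM}_A(P,P\otimes_BL)$ given by $\gamma(b\otimes l)(p)=pb\otimes l$ is a graded epimorphism of degree $e$ of graded left $B$-modules with torsion kernel.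
   Context: $\Gamma$ is a fixed multiplicative group with identity $e$. Rings are associative $\Gamma$-graded, not necessarily unital; $A$ is idempotent if $A^2=A$. A graded left module is unital if $AM=M$, torsion-free if $Am=0\Rightarrow m=0$; a module has torsion kernel if every element $k$ of the kernel satisfies $Ak=0$ (for $B$-modules: $Bk=0$). A left-linear $f$ is graded of degree $\sigma$ if $f(M_\tau)\subseteq N_{\tau\sigma}$; $\mathrm{HOM}$ is the direct sum over degrees. For ${}_RM_S$ and a graded left $R$-module $N$, $\mathrm{HOM}_R(M,N)$ is a graded left $S$-module via $(sf)(m)=f(ms)$; $S\cdot H$ denotes finite sums $\sum s_ih_i$. (In particular $\mathrm{HOM}_A(A,K)$ is a left $A$-module via $(af)(x)=f(xa)$.) A graded Morita context $(A,B,P,Q,\mu,\nu)$: idempotent graded rings $A,B$, graded bimodules ${}_AP_B$, ${}_BQ_A$ unital on both sides, degree-$e$ graded bimodule maps $\mu:P\otimes_BQ\to A$, $\langle p,q\rangle=\mu(p\otimes q)$, $\nu:Q\otimes_AP\to B$, $[q,p]=\nu(q\otimes p)$, with $p'[q,p]=\langle p',q\rangle p$ and $q'\langle p,q\rangle=[q',p]q$. *)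

theory Defs
  imports Main "HOL-Library.Function_Algebras"
begin

text \<open>The multiplicative grading group Gamma, with identity 1 (playing the role of e).\<close>
class mult_group = monoid_mult +
  assumes mult_group_inverse_ex: "\<exists>b. b * a = 1"

definition grading :: "'m::ab_group_add set \<Rightarrow> ('g \<Rightarrow> 'm set) \<Rightarrow> bool" where
  "grading M D \<longleftrightarrow>
     (\<forall>s. 0 \<in> D s \<and> D s \<subseteq> M \<and> (\<forall>x\<in>D s. \<forall>y\<in>D s. x - y \<in> D s)) \<and>
     (\<forall>m\<in>M. \<exists>!c. finite {s. c s \<noteq> 0} \<and> (\<forall>s. c s \<in> D s) \<and>
                   m = (\<Sum>s\<in>{s. c s \<noteq> 0}. c s))"

text \<open>A Gamma-graded (associative, not necessarily unital) ring: the whole type 'a.\<close>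
definition graded_ring :: "('g::mult_group \<Rightarrow> 'a::ring set) \<Rightarrow> bool" where
  "graded_ring gA \<longleftrightarrow> grading UNIV gA \<and>
     (\<forall>s t. \<forall>x\<in>gA s. \<forall>y\<in>gA t. x * y \<in> gA (s * t))"

definition idempotent_ring :: "'a::ring itself \<Rightarrow> bool" where
  "idempotent_ring _ \<longleftrightarrow> (\<forall>a::'a. \<exists>xs. a = sum_list (map (\<lambda>(x,y). x * y) xs))"

definition graded_lmod ::
  "('g::mult_group \<Rightarrow> 'a::ring set) \<Rightarrow> ('g \<Rightarrow> 'm::ab_group_add set) \<Rightarrow> ('a \<Rightarrow> 'm \<Rightarrow> 'm) \<Rightarrow> bool" where
  "graded_lmod gA gM act \<longleftrightarrow> grading UNIV gM \<and>
     (\<forall>a b m. act (a + b) m = act a m + act b m) \<and>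
     (\<forall>a m n. act a (m + n) = act a m + act a n) \<and>
     (\<forall>a b m. act (a * b) m = act a (act b m)) \<and>
     (\<forall>s t. \<forall>a\<in>gA s. \<forall>m\<in>gM t. act a m \<in> gM (s * t))"

definition graded_rmod ::
  "('g::mult_group \<Rightarrow> 'b::ring set) \<Rightarrow> ('g \<Rightarrow> 'm::ab_group_add set) \<Rightarrow> ('m \<Rightarrow> 'b \<Rightarrow> 'm) \<Rightarrow> bool" where
  "graded_rmod gB gM rac \<longleftrightarrow> grading UNIV gM \<and>
     (\<forall>m a b. rac m (a + b) = rac m a + rac m b) \<and>
     (\<forall>m n a. rac (m + n) a = rac m a + rac n a) \<and>
     (\<forall>m a b. rac m (a * b) = rac (rac m a) b) \<and>
     (\<forall>s t. \<forall>m\<in>gM s. \<forall>b\<in>gB t. rac m b \<in> gM (s * t))"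

definition bimod_compat :: "('a \<Rightarrow> 'm \<Rightarrow> 'm) \<Rightarrow> ('m \<Rightarrow> 'b \<Rightarrow> 'm) \<Rightarrow> bool" where
  "bimod_compat act rac \<longleftrightarrow> (\<forall>a m b. act a (rac m b) = rac (act a m) b)"

definition lunital :: "('a \<Rightarrow> 'm::ab_group_add \<Rightarrow> 'm) \<Rightarrow> bool" where
  "lunital act \<longleftrightarrow> (\<forall>m. \<exists>xs. m = sum_list (map (\<lambda>(a,n). act a n) xs))"

definition runital :: "('m::ab_group_add \<Rightarrow> 'b \<Rightarrow> 'm) \<Rightarrow> bool" where
  "runital rac \<longleftrightarrow> (\<forall>m. \<exists>xs. m = sum_list (map (\<lambda>(n,b). rac n b) xs))"

definition torsion_free :: "('a \<Rightarrow> 'm::ab_group_add \<Rightarrow> 'm) \<Rightarrow> bool" where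
  "torsion_free act \<longleftrightarrow> (\<forall>m. (\<forall>a. act a m = 0) \<longrightarrow> m = 0)"

text \<open>The degree-e bimodule maps mu : P (x)_B Q -> A and nu : Q (x)_A P -> B are given,
  by the universal property of the tensor product, as balanced biadditive maps.\<close>
definition graded_morita_context ::
  "('g::mult_group \<Rightarrow> 'a::ring set) \<Rightarrow> ('g \<Rightarrow> 'b::ring set) \<Rightarrow>
   ('g \<Rightarrow> 'p::ab_group_add set) \<Rightarrow> ('g \<Rightarrow> 'q::ab_group_add set) \<Rightarrow>
   ('a \<Rightarrow> 'p \<Rightarrow> 'p) \<Rightarrow> ('p \<Rightarrow> 'b \<Rightarrow> 'p) \<Rightarrow> ('b \<Rightarrow> 'q \<Rightarrow> 'q) \<Rightarrow> ('q \<Rightarrow> 'a \<Rightarrow> 'q) \<Rightarrow>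
   ('p \<Rightarrow> 'q \<Rightarrow> 'a) \<Rightarrow> ('q \<Rightarrow> 'p \<Rightarrow> 'b) \<Rightarrow> bool" where
  "graded_morita_context gA gB gP gQ lP rP lQ rQ mu nu \<longleftrightarrow>
     graded_ring gA \<and> graded_ring gB \<and>
     idempotent_ring TYPE('a) \<and> idempotent_ring TYPE('b) \<and>
     graded_lmod gA gP lP \<and> graded_rmod gB gP rP \<and> bimod_compat lP rP \<and>
     lunital lP \<and> runital rP \<and>
     graded_lmod gB gQ lQ \<and> graded_rmod gA gQ rQ \<and> bimod_compat lQ rQ \<and>
     lunital lQ \<and> runital rQ \<and>
     \<comment> \<open>mu : P (x)_B Q -> A, graded A-A-bimodule map of degree e\<close>
     (\<forall>p p' q. mu (p + p') q = mu p q + mu p' q) \<and>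
     (\<forall>p q q'. mu p (q + q') = mu p q + mu p q') \<and>
     (\<forall>p b q. mu (rP p b) q = mu p (lQ b q)) \<and>
     (\<forall>a p q. mu (lP a p) q = a * mu p q) \<and>
     (\<forall>p q a. mu p (rQ q a) = mu p q * a) \<and>
     (\<forall>s t. \<forall>p\<in>gP s. \<forall>q\<in>gQ t. mu p q \<in> gA (s * t)) \<and>
     \<comment> \<open>nu : Q (x)_A P -> B, graded B-B-bimodule map of degree e\<close>
     (\<forall>q q' p. nu (q + q') p = nu q p + nu q' p) \<and>
     (\<forall>q p p'. nu q (p + p') = nu q p + nu q p') \<and>
     (\<forall>q a p. nu (rQ q a) p = nu q (lP a p)) \<and>
     (\<forall>b q p. nu (lQ b q) p = b * nu q p) \<and>
     (\<forall>q p b. nu q (rP p b) = nu q p * b) \<and>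
     (\<forall>s t. \<forall>q\<in>gQ s. \<forall>p\<in>gP t. nu q p \<in> gB (s * t)) \<and>
     \<comment> \<open>associativity conditions\<close>
     (\<forall>p' q p. rP p' (nu q p) = lP (mu p' q) p) \<and>
     (\<forall>q' p q. rQ q' (mu p q) = lQ (nu q' p) q)"

definition surjective_traces :: "('p \<Rightarrow> 'q \<Rightarrow> 'a::ring) \<Rightarrow> ('q \<Rightarrow> 'p \<Rightarrow> 'b::ring) \<Rightarrow> bool" where
  "surjective_traces mu nu \<longleftrightarrow>
     (\<forall>a. \<exists>xs. a = sum_list (map (\<lambda>(p,q). mu p q) xs)) \<and>
     (\<forall>b. \<exists>xs. b = sum_list (map (\<lambda>(q,p). nu q p) xs))"

definition hom_deg ::
  "('g::mult_group \<Rightarrow> 'm::ab_group_add set) \<Rightarrow> ('g \<Rightarrow> 'n::ab_group_add set) \<Rightarrow>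
   ('a \<Rightarrow> 'm \<Rightarrow> 'm) \<Rightarrow> ('a \<Rightarrow> 'n \<Rightarrow> 'n) \<Rightarrow> 'g \<Rightarrow> ('m \<Rightarrow> 'n) set" where
  "hom_deg gM gN actM actN s =
     {f. (\<forall>x y. f (x + y) = f x + f y) \<and> (\<forall>a x. f (actM a x) = actN a (f x)) \<and>
         (\<forall>t. \<forall>x\<in>gM t. f x \<in> gN (t * s))}"

definition HOM ::
  "('g::mult_group \<Rightarrow> 'm::ab_group_add set) \<Rightarrow> ('g \<Rightarrow> 'n::ab_group_add set) \<Rightarrow>
   ('a \<Rightarrow> 'm \<Rightarrow> 'm) \<Rightarrow> ('a \<Rightarrow> 'n \<Rightarrow> 'n) \<Rightarrow> ('m \<Rightarrow> 'n) set" where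
  "HOM gM gN actM actN =
     {f. \<exists>S c. finite S \<and> (\<forall>s\<in>S. c s \<in> hom_deg gM gN actM actN s) \<and> f = (\<Sum>s\<in>S. c s)}"

definition hom_act :: "('m \<Rightarrow> 's \<Rightarrow> 'm) \<Rightarrow> 's \<Rightarrow> ('m \<Rightarrow> 'n) \<Rightarrow> ('m \<Rightarrow> 'n)" where
  "hom_act rac s f = (\<lambda>m. f (rac m s))"

text \<open>S . H : finite sums of elements s h with s in S (the whole ring) and h in H.\<close>
definition span_act :: "('s \<Rightarrow> 'h \<Rightarrow> 'h::ab_group_add) \<Rightarrow> 'h set \<Rightarrow> 'h set" where
  "span_act act H = {sum_list (map (\<lambda>(s,h). act s h) xs) | xs. \<forall>z\<in>set xs. snd z \<in> H}"

definition zsmul :: "int \<Rightarrow> 'm::ab_group_add \<Rightarrow> 'm" where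
  "zsmul n v = (if 0 \<le> n then (\<Sum>_<nat n. v) else - (\<Sum>_<nat (- n). v))"

text \<open>Free abelian group on a set S: finitely supported integer-valued functions on S.\<close>
definition free_on :: "'z set \<Rightarrow> ('z \<Rightarrow> int) set" where
  "free_on S = {x. finite {z. x z \<noteq> 0} \<and> {z. x z \<noteq> 0} \<subseteq> S}"

definition delta :: "'z \<Rightarrow> 'z \<Rightarrow> int" where
  "delta z = (\<lambda>w. if w = z then 1 else 0)"

inductive_set tensor_rels ::
  "'x::ab_group_add set \<Rightarrow> 'y::ab_group_add set \<Rightarrow> ('x \<Rightarrow> 'r \<Rightarrow> 'x) \<Rightarrow> ('r \<Rightarrow> 'y \<Rightarrow> 'y) \<Rightarrow>
   ('x \<times> 'y \<Rightarrow> int) set"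
  for X1 X2 rac lac where
  rel_zero: "0 \<in> tensor_rels X1 X2 rac lac"
| rel_add1: "\<lbrakk>u \<in> X1; u' \<in> X1; y \<in> X2\<rbrakk> \<Longrightarrow>
     delta (u + u', y) - delta (u, y) - delta (u', y) \<in> tensor_rels X1 X2 rac lac"
| rel_add2: "\<lbrakk>u \<in> X1; y \<in> X2; y' \<in> X2\<rbrakk> \<Longrightarrow>
     delta (u, y + y') - delta (u, y) - delta (u, y') \<in> tensor_rels X1 X2 rac lac"
| rel_bal: "\<lbrakk>u \<in> X1; y \<in> X2; rac u r \<in> X1; lac r y \<in> X2\<rbrakk> \<Longrightarrow>
     delta (rac u r, y) - delta (u, lac r y) \<in> tensor_rels X1 X2 rac lac"
| rel_diff: "\<lbrakk>x \<in> tensor_rels X1 X2 rac lac; x' \<in> tensor_rels X1 X2 rac lac\<rbrakk> \<Longrightarrow>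
     x - x' \<in> tensor_rels X1 X2 rac lac"

definition zlift :: "('x \<Rightarrow> 'y \<Rightarrow> 't::ab_group_add) \<Rightarrow> ('x \<times> 'y \<Rightarrow> int) \<Rightarrow> 't" where
  "zlift tp x = (\<Sum>z\<in>{z. x z \<noteq> 0}. zsmul (x z) (tp (fst z) (snd z)))"

text \<open>(T, tp) is a tensor product X1 (x)_R X2: the type 't is (via tp) the free abelian group on
  X1 x X2 modulo the defining relations, i.e. tp is biadditive and balanced, its values
  generate 't, and the induced map free_on (X1 x X2) -> 't has kernel exactly tensor_rels.\<close>
definition is_tensor ::
  "'x::ab_group_add set \<Rightarrow> 'y::ab_group_add set \<Rightarrow> ('x \<Rightarrow> 'r \<Rightarrow> 'x) \<Rightarrow> ('r \<Rightarrow> 'y \<Rightarrow> 'y) \<Rightarrow>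
   ('x \<Rightarrow> 'y \<Rightarrow> 't::ab_group_add) \<Rightarrow> bool" where
  "is_tensor X1 X2 rac lac tp \<longleftrightarrow>
     (\<forall>u\<in>X1. \<forall>u'\<in>X1. \<forall>y\<in>X2. tp (u + u') y = tp u y + tp u' y) \<and>
     (\<forall>u\<in>X1. \<forall>y\<in>X2. \<forall>y'\<in>X2. tp u (y + y') = tp u y + tp u y') \<and>
     (\<forall>u\<in>X1. \<forall>y\<in>X2. \<forall>r. rac u r \<in> X1 \<and> lac r y \<in> X2 \<longrightarrow> tp (rac u r) y = tp u (lac r y)) \<and>
     (\<forall>t. \<exists>xs. set xs \<subseteq> X1 \<times> X2 \<and> t = sum_list (map (\<lambda>(u,y). tp u y) xs)) \<and>
     (\<forall>x\<in>free_on (X1 \<times> X2). zlift tp x = 0 \<longleftrightarrow> x \<in> tensor_rels X1 X2 rac lac)"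

definition tensor_grading ::
  "('g::mult_group \<Rightarrow> 'x set) \<Rightarrow> ('g \<Rightarrow> 'y set) \<Rightarrow> ('x \<Rightarrow> 'y \<Rightarrow> 't::ab_group_add) \<Rightarrow> 'g \<Rightarrow> 't set" where
  "tensor_grading g1 g2 tp s =
     {sum_list (map (\<lambda>(u,y). tp u y) xs) | xs.
        \<forall>z\<in>set xs. \<exists>a b. fst z \<in> g1 a \<and> snd z \<in> g2 b \<and> a * b = s}"

end

theory Submission
  imports Defs
begin


lemma fun_sum_apply: "(sum g S) x = (\<Sum>s\<in>S. g s x)"
  by (induction S rule: infinite_finite_induct) auto

lemma fun_sum_list_apply: "(sum_list xs) x = sum_list (map (\<lambda>f. f x) xs)"
  by (induction xs) auto

definition addf :: "('x::ab_group_add \<Rightarrow> 'y::ab_group_add) \<Rightarrow> bool" where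
  "addf F \<longleftrightarrow> (\<forall>x y. F (x + y) = F x + F y)"

lemma addf_0: "addf F \<Longrightarrow> F 0 = 0"
  unfolding addf_def by (metis add_cancel_right_right add_0)

lemma addf_sum: "addf F \<Longrightarrow> F (sum g S) = (\<Sum>s\<in>S. F (g s))"
  by (induction S rule: infinite_finite_induct) (auto simp: addf_0 addf_def)

lemma addf_sum_list: "addf F \<Longrightarrow> F (sum_list xs) = sum_list (map F xs)"
  by (induction xs) (auto simp: addf_0 addf_def)

definition addclosed :: "'x::ab_group_add set \<Rightarrow> bool" where
  "addclosed C \<longleftrightarrow> 0 \<in> C \<and> (\<forall>x\<in>C. \<forall>y\<in>C. x + y \<in> C)"

lemma addclosed_sum: "addclosed C \<Longrightarrow> (\<forall>s\<in>S. g s \<in> C) \<Longrightarrow> sum g S \<in> C"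
  by (induction S rule: infinite_finite_induct) (auto simp: addclosed_def)

lemma addclosed_sum_list: "addclosed C \<Longrightarrow> (\<forall>x\<in>set xs. x \<in> C) \<Longrightarrow> sum_list xs \<in> C"
  by (induction xs) (auto simp: addclosed_def)

lemma grading_decomp:
  assumes "grading UNIV D"
  obtains S c where "finite S" "\<forall>s\<in>S. c s \<in> D s" "m = sum c S"
proof -
  from assms obtain c where "finite {s. c s \<noteq> 0}" "\<forall>s. c s \<in> D s" "m = (\<Sum>s\<in>{s. c s \<noteq> 0}. c s)"
    unfolding grading_def by blast
  thus ?thesis using that by blast
qed

lemma grading_addclosed:
  assumes "grading M D" shows "addclosed (D s)"
proof -
  have "0 \<in> D s" "\<forall>x\<in>D s. \<forall>y\<in>D s. x - y \<in> D s" using assms unfolding grading_def by auto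
  then show ?thesis unfolding addclosed_def by (metis diff_0 diff_minus_eq_add)
qed

lemma graded_induct:
  assumes "grading UNIV D" "addclosed C" "addf F" "\<And>s x. x \<in> D s \<Longrightarrow> F x \<in> C"
  shows "F x \<in> C"
proof -
  obtain S c where "finite S" "\<forall>s\<in>S. c s \<in> D s" "x = sum c S"
    using grading_decomp[OF assms(1)] by blast
  then have "F x = (\<Sum>s\<in>S. F (c s))" using addf_sum[OF assms(3)] by simp
  also have "\<dots> \<in> C"
    by (rule addclosed_sum[OF assms(2)]) (use assms(4) \<open>\<forall>s\<in>S. c s \<in> D s\<close> in blast)
  finally show ?thesis .
qed

lemma span_act_addclosed: "addclosed (span_act act H)"
proof -
  have "0 \<in> span_act act H" unfolding span_act_def by (intro CollectI exI[of _ "[]"]) auto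
  moreover have "x + y \<in> span_act act H" if h: "x \<in> span_act act H" "y \<in> span_act act H" for x y
  proof -
    obtain xs where "x = sum_list (map (\<lambda>(s,h). act s h) xs)" "\<forall>z\<in>set xs. snd z \<in> H"
      using h(1) unfolding span_act_def by blast
    moreover obtain ys where "y = sum_list (map (\<lambda>(s,h). act s h) ys)" "\<forall>z\<in>set ys. snd z \<in> H"
      using h(2) unfolding span_act_def by blast
    ultimately show ?thesis unfolding span_act_def by (intro CollectI exI[of _ "xs @ ys"]) auto
  qed
  ultimately show ?thesis unfolding addclosed_def by blast
qed

lemma span_act_gen: "h \<in> H \<Longrightarrow> act s h \<in> span_act act H"
  unfolding span_act_def by (intro CollectI exI[of _ "[(s,h)]"]) auto

lemma tensor_grading_addclosed: "addclosed (tensor_grading g1 g2 tp s)"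
proof -
  have "0 \<in> tensor_grading g1 g2 tp s" unfolding tensor_grading_def by (intro CollectI exI[of _ "[]"]) auto
  moreover have "x + y \<in> tensor_grading g1 g2 tp s" if h: "x \<in> tensor_grading g1 g2 tp s" "y \<in> tensor_grading g1 g2 tp s" for x y
  proof -
    obtain xs where "x = sum_list (map (\<lambda>(u,y). tp u y) xs)" "\<forall>z\<in>set xs. \<exists>a b. fst z \<in> g1 a \<and> snd z \<in> g2 b \<and> a * b = s"
      using h(1) unfolding tensor_grading_def by blast
    moreover obtain ys where "y = sum_list (map (\<lambda>(u,y). tp u y) ys)" "\<forall>z\<in>set ys. \<exists>a b. fst z \<in> g1 a \<and> snd z \<in> g2 b \<and> a * b = s"
      using h(2) unfolding tensor_grading_def by blast
    ultimately show ?thesis unfolding tensor_grading_def by (intro CollectI exI[of _ "xs @ ys"]) auto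
  qed
  ultimately show ?thesis unfolding addclosed_def by blast
qed

lemma tensor_grading_gen: "u \<in> g1 a \<Longrightarrow> y \<in> g2 b \<Longrightarrow> tp u y \<in> tensor_grading g1 g2 tp (a * b)"
  unfolding tensor_grading_def by (intro CollectI exI[of _ "[(u,y)]"]) auto

lemma hom_deg_addclosed:
  assumes "\<And>t. addclosed (gN t)" "\<And>a x y. actN a (x + y) = actN a x + actN a y"
  shows "addclosed (hom_deg gM gN actM actN s)"
proof -
  have z: "actN a 0 = 0" for a using assms(2)[of a 0 0] by simp
  have "0 \<in> hom_deg gM gN actM actN s"
    using assms(1) z unfolding addclosed_def hom_deg_def zero_fun_def by simp
  moreover have "f + g \<in> hom_deg gM gN actM actN s" if "f \<in> hom_deg gM gN actM actN s" "g \<in> hom_deg gM gN actM actN s" for f g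
  proof -
    have "(f + g) (x + y) = (f + g) x + (f + g) y" for x y
      using that unfolding hom_deg_def by (simp add: ac_simps)
    moreover have "(f + g) (actM a x) = actN a ((f + g) x)" for a x
      using that assms(2) unfolding hom_deg_def by simp
    moreover have "\<forall>t. \<forall>x\<in>gM t. (f + g) x \<in> gN (t * s)"
      using that assms(1) unfolding hom_deg_def addclosed_def by simp
    ultimately show ?thesis unfolding hom_deg_def by blast
  qed
  ultimately show ?thesis unfolding addclosed_def by blast
qed

lemma HOM_addclosed:
  assumes "\<And>t. addclosed (gN t)" "\<And>a x y. actN a (x + y) = actN a x + actN a y"
  shows "addclosed (HOM gM gN actM actN)"
proof -
  have hd: "addclosed (hom_deg gM gN actM actN s)" for s by (rule hom_deg_addclosed[OF assms])
  have z: "0 \<in> HOM gM gN actM actN" unfolding HOM_def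
    by (intro CollectI exI[of _ "{}"]) simp
  have p: "f + g \<in> HOM gM gN actM actN" if h: "f \<in> HOM gM gN actM actN" "g \<in> HOM gM gN actM actN" for f g
  proof -
    obtain S c where a1: "finite S" "\<forall>s\<in>S. c s \<in> hom_deg gM gN actM actN s" "f = sum c S"
      using h(1) unfolding HOM_def by blast
    obtain S' c' where a2: "finite S'" "\<forall>s\<in>S'. c' s \<in> hom_deg gM gN actM actN s" "g = sum c' S'"
      using h(2) unfolding HOM_def by blast
    define d where "d s = (if s \<in> S then c s else 0) + (if s \<in> S' then c' s else 0)" for s
    have dm: "d s \<in> hom_deg gM gN actM actN s" for s
    proof -
      have "0 \<in> hom_deg gM gN actM actN s" "\<forall>x\<in>hom_deg gM gN actM actN s. \<forall>y\<in>hom_deg gM gN actM actN s. x + y \<in> hom_deg gM gN actM actN s"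
        using hd[of s] unfolding addclosed_def by auto
      then show ?thesis unfolding d_def using a1(2) a2(2) by (auto split: if_splits)
    qed
    have f: "finite (S \<union> S')" using a1(1) a2(1) by simp
    have e1: "(\<Sum>s\<in>S \<union> S'. if s \<in> S then c s else 0) = sum c S"
      using f by (simp add: sum.If_cases Int_absorb1)
    have e2: "(\<Sum>s\<in>S \<union> S'. if s \<in> S' then c' s else 0) = sum c' S'"
      using f by (simp add: sum.If_cases Int_absorb1)
    have "f + g = sum d (S \<union> S')"
      unfolding d_def sum.distrib e1 e2 a1(3) a2(3) ..
    then show ?thesis unfolding HOM_def using f dm by blast
  qed
  show ?thesis unfolding addclosed_def using z p by blast
qed

lemma hom_deg_HOM: "f \<in> hom_deg gM gN actM actN s \<Longrightarrow> f \<in> HOM gM gN actM actN"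
  unfolding HOM_def by (intro CollectI exI[of _ "{s}"] exI[of _ "\<lambda>_. f"]) auto

lemma HOM_lin:
  assumes "f \<in> HOM gM gN actM actN" "\<And>a x y. actN a (x + y) = actN a x + actN a y"
  shows "addf f" "\<And>a x. f (actM a x) = actN a (f x)"
proof -
  obtain S c where a: "finite S" "\<forall>s\<in>S. c s \<in> hom_deg gM gN actM actN s" "f = sum c S"
    using assms(1) unfolding HOM_def by blast
  have ad: "addf (actN a)" for a using assms(2) unfolding addf_def by auto
  show "addf f" unfolding addf_def a(3) fun_sum_apply
  proof (intro allI)
    fix x y
    have "c s (x + y) = c s x + c s y" if "s \<in> S" for s using a(2) that unfolding hom_deg_def by blast
    then show "(\<Sum>s\<in>S. c s (x + y)) = (\<Sum>s\<in>S. c s x) + (\<Sum>s\<in>S. c s y)"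
      by (simp add: sum.distrib[symmetric])
  qed
  show "f (actM a x) = actN a (f x)" for a x unfolding a(3) fun_sum_apply addf_sum[OF ad]
  proof -
    have "c s (actM a x) = actN a (c s x)" if "s \<in> S" for s using a(2) that unfolding hom_deg_def by blast
    then show "(\<Sum>s\<in>S. c s (actM a x)) = (\<Sum>s\<in>S. actN a (c s x))" by simp
  qed
qed



definition nsm :: "nat \<Rightarrow> 'm::ab_group_add \<Rightarrow> 'm" where "nsm k v = (\<Sum>_<k. v)"

lemma nsm_add: "nsm (a + b) v = nsm a v + nsm b v"
  unfolding nsm_def by (induction b) (auto simp: ac_simps)

lemma zsmul_nsm: "zsmul n v = nsm (nat n) v - nsm (nat (- n)) v"
  unfolding zsmul_def nsm_def by auto

lemma zsmul_add: "zsmul (m + n) v = zsmul m v + zsmul n v"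
proof -
  have "nat (m + n) + (nat (-m) + nat (-n)) = nat (- (m + n)) + (nat m + nat n)" by arith
  then have "nsm (nat (m + n)) v + (nsm (nat (-m)) v + nsm (nat (-n)) v) =
             nsm (nat (- (m + n))) v + (nsm (nat m) v + nsm (nat n) v)"
    by (metis nsm_add)
  then show ?thesis unfolding zsmul_nsm by (simp add: algebra_simps)
qed

lemma zsmul_0 [simp]: "zsmul 0 v = 0" unfolding zsmul_def by simp
lemma zsmul_1 [simp]: "zsmul 1 v = v" unfolding zsmul_def by simp

lemma zsmul_minus: "zsmul (- n) v = - zsmul n v"
  using zsmul_add[of n "-n" v] by (simp add: add.commute eq_neg_iff_add_eq_0)

lemma zsmul_diff: "zsmul (m - n) v = zsmul m v - zsmul n v"
  using zsmul_add[of m "-n" v] zsmul_minus[of n v] by simp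

definition supp :: "('z \<Rightarrow> int) \<Rightarrow> 'z set" where "supp x = {z. x z \<noteq> 0}"

lemma zlift_super:
  assumes "finite S" "supp x \<subseteq> S"
  shows "zlift tp x = (\<Sum>z\<in>S. zsmul (x z) (tp (fst z) (snd z)))"
  unfolding zlift_def
  by (rule sum.mono_neutral_left) (use assms in \<open>auto simp: supp_def\<close>)

lemma zlift_add:
  assumes "finite (supp x)" "finite (supp y)"
  shows "zlift tp (x + y) = zlift tp x + zlift tp y"
proof -
  let ?S = "supp x \<union> supp y"
  have f: "finite ?S" using assms by simp
  have "supp (x + y) \<subseteq> ?S" by (auto simp: supp_def)
  then show ?thesis
    using zlift_super[OF f, of "x + y" tp] zlift_super[OF f, of x tp] zlift_super[OF f, of y tp]
    by (simp add: zsmul_add sum.distrib)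
qed

lemma zlift_diff:
  assumes "finite (supp x)" "finite (supp y)"
  shows "zlift tp (x - y) = zlift tp x - zlift tp y"
proof -
  let ?S = "supp x \<union> supp y"
  have f: "finite ?S" using assms by simp
  have "supp (x - y) \<subseteq> ?S" by (auto simp: supp_def)
  then show ?thesis
    using zlift_super[OF f, of "x - y" tp] zlift_super[OF f, of x tp] zlift_super[OF f, of y tp]
    by (simp add: zsmul_diff sum_subtractf)
qed

lemma supp_delta: "supp (delta z) = {z}" by (auto simp: supp_def delta_def)

lemma zlift_delta: "zlift tp (delta z) = tp (fst z) (snd z)"
proof -
  have "zlift tp (delta z) = (\<Sum>w\<in>{z}. zsmul (delta z w) (tp (fst w) (snd w)))"
    by (rule zlift_super) (auto simp: supp_delta)
  then show ?thesis by (simp add: delta_def)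
qed

lemma zlift_zero: "zlift tp 0 = 0" "zlift tp (\<lambda>_. 0) = 0" unfolding zlift_def by simp_all

lemma supp_add: "supp (x + y) \<subseteq> supp x \<union> supp y" by (auto simp: supp_def)
lemma supp_diff: "supp (x - y) \<subseteq> supp x \<union> supp y" by (auto simp: supp_def)

lemma tensor_rels_vanish:
  assumes x: "x \<in> tensor_rels X1 X2 rac lac"
    and a1: "\<forall>u\<in>X1. \<forall>u'\<in>X1. \<forall>y\<in>X2. F (u + u') y = F u y + F u' y"
    and a2: "\<forall>u\<in>X1. \<forall>y\<in>X2. \<forall>y'\<in>X2. F u (y + y') = F u y + F u y'"
    and a3: "\<forall>u\<in>X1. \<forall>y\<in>X2. \<forall>r. rac u r \<in> X1 \<and> lac r y \<in> X2 \<longrightarrow> F (rac u r) y = F u (lac r y)"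
  shows "finite (supp x) \<and> zlift F x = 0"
  using x
proof induction
  case rel_zero
  then show ?case by (simp add: supp_def zlift_zero)
next
  case (rel_add1 u u' y)
  have fd: "finite (supp (delta z))" for z by (simp add: supp_delta)
  have fs: "finite (supp (delta z - delta z'))" for z z'
    using supp_diff[of "delta z" "delta z'"] by (simp add: supp_delta finite_subset)
  have "finite (supp (delta (u + u', y) - delta (u, y) - delta (u', y)))"
    using supp_diff[of "delta (u + u', y) - delta (u, y)" "delta (u', y)"] fs[of "(u + u', y)" "(u, y)"]
    by (simp add: supp_delta finite_subset)
  moreover have "zlift F (delta (u + u', y) - delta (u, y) - delta (u', y)) = 0"
    using rel_add1 a1 by (simp add: zlift_diff fd fs zlift_delta)
  ultimately show ?case by blast
next
  case (rel_add2 u y y')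
  have fd: "finite (supp (delta z))" for z by (simp add: supp_delta)
  have fs: "finite (supp (delta z - delta z'))" for z z'
    using supp_diff[of "delta z" "delta z'"] by (simp add: supp_delta finite_subset)
  have "finite (supp (delta (u, y + y') - delta (u, y) - delta (u, y')))"
    using supp_diff[of "delta (u, y + y') - delta (u, y)" "delta (u, y')"] fs[of "(u, y + y')" "(u, y)"]
    by (simp add: supp_delta finite_subset)
  moreover have "zlift F (delta (u, y + y') - delta (u, y) - delta (u, y')) = 0"
    using rel_add2 a2 by (simp add: zlift_diff fd fs zlift_delta)
  ultimately show ?case by blast
next
  case (rel_bal u y r)
  have fd: "finite (supp (delta z))" for z by (simp add: supp_delta)
  have "finite (supp (delta (rac u r, y) - delta (u, lac r y)))"
    using supp_diff[of "delta (rac u r, y)" "delta (u, lac r y)"] by (simp add: supp_delta finite_subset)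
  moreover have "zlift F (delta (rac u r, y) - delta (u, lac r y)) = 0"
    using rel_bal a3 by (simp add: zlift_diff fd zlift_delta)
  ultimately show ?case by blast
next
  case (rel_diff x x')
  have "finite (supp (x - x'))" using rel_diff supp_diff[of x x'] by (meson finite_UnI finite_subset)
  moreover have "zlift F (x - x') = 0" using rel_diff by (simp add: zlift_diff)
  ultimately show ?case by blast
qed

lemma free_on_supp: "x \<in> free_on S \<longleftrightarrow> finite (supp x) \<and> supp x \<subseteq> S"
  unfolding free_on_def supp_def by simp

lemma tensor_lift:
  fixes F :: "'x::ab_group_add \<Rightarrow> 'y::ab_group_add \<Rightarrow> 'u::ab_group_add"
  assumes T: "is_tensor X1 X2 rac lac tp"
    and a1: "\<forall>u\<in>X1. \<forall>u'\<in>X1. \<forall>y\<in>X2. F (u + u') y = F u y + F u' y"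
    and a2: "\<forall>u\<in>X1. \<forall>y\<in>X2. \<forall>y'\<in>X2. F u (y + y') = F u y + F u y'"
    and a3: "\<forall>u\<in>X1. \<forall>y\<in>X2. \<forall>r. rac u r \<in> X1 \<and> lac r y \<in> X2 \<longrightarrow> F (rac u r) y = F u (lac r y)"
  shows "\<exists>\<psi>. (\<forall>s t. \<psi> (s + t) = \<psi> s + \<psi> t) \<and> (\<forall>u\<in>X1. \<forall>y\<in>X2. \<psi> (tp u y) = F u y)"
proof -
  have gen: "\<forall>t. \<exists>xs. set xs \<subseteq> X1 \<times> X2 \<and> t = sum_list (map (\<lambda>(u,y). tp u y) xs)"
    and ker: "\<forall>x\<in>free_on (X1 \<times> X2). zlift tp x = 0 \<longleftrightarrow> x \<in> tensor_rels X1 X2 rac lac"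
    using T unfolding is_tensor_def by blast+
  have ex: "\<exists>x. x \<in> free_on (X1 \<times> X2) \<and> zlift tp x = t" for t
  proof -
    obtain xs where xs: "set xs \<subseteq> X1 \<times> X2" "t = sum_list (map (\<lambda>(u,y). tp u y) xs)" using gen by blast
    have "sum_list (map delta xs) \<in> free_on (X1 \<times> X2) \<and>
          zlift tp (sum_list (map delta xs)) = sum_list (map (\<lambda>(u,y). tp u y) xs)"
      using xs(1)
    proof (induction xs)
      case Nil
      then show ?case by (simp add: free_on_supp supp_def zlift_zero)
    next
      case (Cons z xs)
      then have IH: "sum_list (map delta xs) \<in> free_on (X1 \<times> X2)"
        "zlift tp (sum_list (map delta xs)) = sum_list (map (\<lambda>(u,y). tp u y) xs)" "z \<in> X1 \<times> X2" by auto
      have "supp (delta z + sum_list (map delta xs)) \<subseteq> supp (delta z) \<union> supp (sum_list (map delta xs))"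
        by (rule supp_add)
      then have "delta z + sum_list (map delta xs) \<in> free_on (X1 \<times> X2)"
        using IH by (auto simp: free_on_supp supp_delta intro: finite_subset)
      moreover have "zlift tp (delta z + sum_list (map delta xs)) = tp (fst z) (snd z) + sum_list (map (\<lambda>(u,y). tp u y) xs)"
        using IH by (simp add: zlift_add free_on_supp supp_delta zlift_delta)
      moreover have "(\<lambda>(u,y). tp u y) z = tp (fst z) (snd z)" by (simp add: case_prod_beta)
      ultimately show ?case by (simp only: list.map sum_list.Cons)
    qed
    then show ?thesis using xs(2) by blast
  qed
  define rep where "rep t = (SOME x. x \<in> free_on (X1 \<times> X2) \<and> zlift tp x = t)" for t
  have rep: "rep t \<in> free_on (X1 \<times> X2)" "zlift tp (rep t) = t" for t
    using someI_ex[OF ex[of t]] unfolding rep_def by blast+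
  define \<psi> where "\<psi> t = zlift F (rep t)" for t
  have key: "\<psi> t = zlift F x" if x: "x \<in> free_on (X1 \<times> X2)" "zlift tp x = t" for x t
  proof -
    have "x - rep t \<in> free_on (X1 \<times> X2)"
      using x(1) rep(1)[of t] supp_diff[of x "rep t"] by (auto simp: free_on_supp intro: finite_subset)
    moreover have "zlift tp (x - rep t) = 0"
      using x rep[of t] by (simp add: zlift_diff free_on_supp)
    ultimately have "x - rep t \<in> tensor_rels X1 X2 rac lac" using ker by blast
    then have "zlift F (x - rep t) = 0" using tensor_rels_vanish[OF _ a1 a2 a3] by blast
    then show ?thesis unfolding \<psi>_def using x(1) rep(1)[of t] by (simp add: zlift_diff free_on_supp)
  qed
  have "\<psi> (s + t) = \<psi> s + \<psi> t" for s t
  proof -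
    have "rep s + rep t \<in> free_on (X1 \<times> X2)"
      using rep(1)[of s] rep(1)[of t] supp_add[of "rep s" "rep t"] by (auto simp: free_on_supp intro: finite_subset)
    moreover have "zlift tp (rep s + rep t) = s + t"
      using rep[of s] rep[of t] by (simp add: zlift_add free_on_supp)
    ultimately have "\<psi> (s + t) = zlift F (rep s + rep t)" by (rule key)
    then show ?thesis unfolding \<psi>_def using rep(1)[of s] rep(1)[of t] by (simp add: zlift_add free_on_supp)
  qed
  moreover have "\<psi> (tp u y) = F u y" if "u \<in> X1" "y \<in> X2" for u y
  proof -
    have "delta (u, y) \<in> free_on (X1 \<times> X2)" using that by (simp add: free_on_supp supp_delta)
    moreover have "zlift tp (delta (u, y)) = tp u y" by (simp add: zlift_delta)
    ultimately show ?thesis using key zlift_delta[of F "(u,y)"] by simp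
  qed
  ultimately show ?thesis by blast
qed


lemma tensor_induct:
  assumes T: "is_tensor X1 X2 rac lac tp" and z: "P 0" and p: "\<And>s t. P s \<Longrightarrow> P t \<Longrightarrow> P (s + t)"
    and g: "\<And>u y. u \<in> X1 \<Longrightarrow> y \<in> X2 \<Longrightarrow> P (tp u y)"
  shows "P t"
proof -
  obtain xs where xs: "set xs \<subseteq> X1 \<times> X2" "t = sum_list (map (\<lambda>(u,y). tp u y) xs)"
    using T unfolding is_tensor_def by blast
  have "P (sum_list (map (\<lambda>(u,y). tp u y) xs))" using xs(1)
  proof (induction xs)
    case Nil then show ?case using z by simp
  next
    case (Cons a xs)
    obtain u y where a: "a = (u, y)" by (cases a)
    show ?case using Cons g[of u y] p a by auto
  qed
  then show ?thesis using xs(2) by simp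
qed

lemma addf_sum_list_in:
  assumes "addf G" "addclosed C" "\<forall>z\<in>set xs. G (f z) \<in> C"
  shows "G (sum_list (map f xs)) \<in> C"
proof -
  have "G (sum_list (map f xs)) = sum_list (map G (map f xs))" by (rule addf_sum_list[OF assms(1)])
  also have "\<dots> \<in> C" by (rule addclosed_sum_list[OF assms(2)]) (use assms(3) in auto)
  finally show ?thesis .
qed

lemma addclosed_Int: "addclosed A \<Longrightarrow> addclosed B \<Longrightarrow> addclosed (A \<inter> B)"
  unfolding addclosed_def by blast

lemma addclosed_zero: "addclosed {0}"
  unfolding addclosed_def by simp

lemma addclosed_range: "addf G \<Longrightarrow> addclosed (range G)"
  unfolding addclosed_def using addf_0[of G] by (auto simp: addf_def) (metis rangeI)

lemma addf_id: "addf (\<lambda>x. x)" unfolding addf_def by simp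

lemma addf_hom_act: "addf (hom_act r b)" unfolding addf_def hom_act_def by auto

lemma hom_act_zero: "hom_act r b 0 = 0" unfolding hom_act_def by auto



lemma part2:
  fixes gA :: "'g::mult_group \<Rightarrow> 'a::ring set" and gB :: "'g \<Rightarrow> 'b::ring set"
    and gP :: "'g \<Rightarrow> 'p::ab_group_add set" and gQ :: "'g \<Rightarrow> 'q::ab_group_add set"
    and lP :: "'a \<Rightarrow> 'p \<Rightarrow> 'p" and rP :: "'p \<Rightarrow> 'b \<Rightarrow> 'p"
    and lQ :: "'b \<Rightarrow> 'q \<Rightarrow> 'q" and rQ :: "'q \<Rightarrow> 'a \<Rightarrow> 'q"
    and mu :: "'p \<Rightarrow> 'q \<Rightarrow> 'a" and nu :: "'q \<Rightarrow> 'p \<Rightarrow> 'b"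
    and gL :: "'g \<Rightarrow> 'l::ab_group_add set" and lL :: "'b \<Rightarrow> 'l \<Rightarrow> 'l"
    and tp2 :: "'b \<Rightarrow> 'l \<Rightarrow> 't2::ab_group_add" and lb2 :: "'b \<Rightarrow> 't2 \<Rightarrow> 't2"
    and tp3 :: "'p \<Rightarrow> 'l \<Rightarrow> 't3::ab_group_add" and la3 :: "'a \<Rightarrow> 't3 \<Rightarrow> 't3"
  defines "BH2 \<equiv> span_act (hom_act rP) (HOM gP (tensor_grading gP gL tp3) lP la3)"
  assumes morita: "graded_morita_context gA gB gP gQ lP rP lQ rQ mu nu"
    and traces: "surjective_traces mu nu"
    and L: "graded_lmod gB gL lL"
    and T2: "is_tensor UNIV UNIV (\<lambda>x b. x * b) lL tp2"
      "\<forall>b' b l. lb2 b' (tp2 b l) = tp2 (b' * b) l"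
      "\<forall>b s t. lb2 b (s + t) = lb2 b s + lb2 b t"
    and T3: "is_tensor UNIV UNIV rP lL tp3"
      "\<forall>a p l. la3 a (tp3 p l) = tp3 (lP a p) l"
      "\<forall>a s t. la3 a (s + t) = la3 a s + la3 a t"
  shows
     "(\<exists>\<gamma> :: 't2 \<Rightarrow> ('p \<Rightarrow> 't3).
        (\<forall>b l. \<gamma> (tp2 b l) = (\<lambda>p. tp3 (rP p b) l)) \<and>
        (\<forall>s t. \<gamma> (s + t) = \<gamma> s + \<gamma> t) \<and>
        (\<forall>b t. \<gamma> (lb2 b t) = hom_act rP b (\<gamma> t)) \<and>
        (\<forall>s. \<gamma> ` tensor_grading gB gL tp2 s
               \<subseteq> BH2 \<inter> hom_deg gP (tensor_grading gP gL tp3) lP la3 (s * 1)) \<and>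
        range \<gamma> = BH2 \<and>
        (\<forall>t. \<gamma> t = 0 \<longrightarrow> (\<forall>b. lb2 b t = 0)))"
proof -
  note defs = graded_morita_context_def graded_lmod_def graded_rmod_def graded_ring_def bimod_compat_def
  have gB: "grading UNIV gB" using morita unfolding defs by (elim conjE) assumption
  have gL: "grading UNIV gL" using L unfolding graded_lmod_def by blast
  have idemB: "idempotent_ring TYPE('b)" using morita unfolding defs by (elim conjE) assumption
  have rP_add1: "\<forall>m a b. rP m (a + b) = rP m a + rP m b" using morita unfolding defs by (elim conjE) assumption
  have rP_add2: "\<forall>m n a. rP (m + n) a = rP m a + rP n a" using morita unfolding defs by (elim conjE) assumption
  have rP_mult: "\<forall>m a b. rP m (a * b) = rP (rP m a) b" using morita unfolding defs by (elim conjE) assumption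
  have rP_gr: "\<forall>s t. \<forall>m\<in>gP s. \<forall>b\<in>gB t. rP m b \<in> gP (s * t)" using morita unfolding defs by (elim conjE) assumption
  have compP: "\<forall>a m b. lP a (rP m b) = rP (lP a m) b" using morita unfolding defs by (elim conjE) assumption
  have nu_add2: "\<forall>q p p'. nu q (p + p') = nu q p + nu q p'" using morita unfolding defs by (elim conjE) assumption
  have nu_r: "\<forall>q p b. nu q (rP p b) = nu q p * b" using morita unfolding defs by (elim conjE) assumption
  have as1: "\<forall>p' q p. rP p' (nu q p) = lP (mu p' q) p" using morita unfolding defs by (elim conjE) assumption
  have trB: "\<forall>b. \<exists>xs. b = sum_list (map (\<lambda>(q,p). nu q p) xs)" using traces unfolding surjective_traces_def by blast
  have t2a1: "\<forall>u u' y. tp2 (u + u') y = tp2 u y + tp2 u' y" using T2(1) unfolding is_tensor_def by blast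
  have t2a2: "\<forall>u y y'. tp2 u (y + y') = tp2 u y + tp2 u y'" using T2(1) unfolding is_tensor_def by blast
  have t2b: "\<forall>u y r. tp2 (u * r) y = tp2 u (lL r y)" using T2(1) unfolding is_tensor_def by blast
  have t3a1: "\<forall>u u' y. tp3 (u + u') y = tp3 u y + tp3 u' y" using T3(1) unfolding is_tensor_def by blast
  have t3a2: "\<forall>u y y'. tp3 u (y + y') = tp3 u y + tp3 u y'" using T3(1) unfolding is_tensor_def by blast
  have t3b: "\<forall>u y r. tp3 (rP u r) y = tp3 u (lL r y)" using T3(1) unfolding is_tensor_def by blast
  have la3_add: "addf (la3 a)" for a using T3(3) unfolding addf_def by blast
  have lb2_add: "addf (lb2 b)" for b using T2(3) unfolding addf_def by blast
  define F where "F b l = (\<lambda>p. tp3 (rP p b) l)" for b l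
  have Fa1: "F (b + b') l = F b l + F b' l" for b b' l unfolding F_def using rP_add1 t3a1 by auto
  have Fa2: "F b (l + l') = F b l + F b l'" for b l l' unfolding F_def using t3a2 by auto
  have Fb: "F (b * r) l = F b (lL r l)" for b r l unfolding F_def using rP_mult t3b by auto
  have Fhact: "hom_act rP b (F x l) = F (b * x) l" for b x l unfolding F_def hom_act_def using rP_mult by auto
  have TGac: "addclosed (tensor_grading gP gL tp3 t)" for t by (rule tensor_grading_addclosed)
  have HOMac: "addclosed (HOM gP (tensor_grading gP gL tp3) lP la3)"
    by (rule HOM_addclosed[OF TGac]) (use T3(3) in blast)
  have hdac: "addclosed (hom_deg gP (tensor_grading gP gL tp3) lP la3 s)" for s
    by (rule hom_deg_addclosed[OF TGac]) (use T3(3) in blast)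
  have Fhd: "F b l \<in> hom_deg gP (tensor_grading gP gL tp3) lP la3 (c * d)" if "b \<in> gB c" "l \<in> gL d" for b l c d
  proof -
    have "F b l (x + y) = F b l x + F b l y" for x y unfolding F_def using rP_add2 t3a1 by auto
    moreover have "F b l (lP a x) = la3 a (F b l x)" for a x unfolding F_def using compP T3(2) by auto
    moreover have "F b l x \<in> tensor_grading gP gL tp3 (t * (c * d))" if "x \<in> gP t" for x t
    proof -
      have "rP x b \<in> gP (t * c)" using rP_gr that \<open>b \<in> gB c\<close> by blast
      then have "tp3 (rP x b) l \<in> tensor_grading gP gL tp3 (t * c * d)"
        by (rule tensor_grading_gen) (rule \<open>l \<in> gL d\<close>)
      then show ?thesis unfolding F_def by (simp add: mult.assoc)
    qed
    ultimately show ?thesis unfolding hom_deg_def by blast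
  qed
  have FH: "F b l \<in> HOM gP (tensor_grading gP gL tp3) lP la3" for b l
  proof (rule graded_induct[OF gB HOMac, of "\<lambda>b. F b l"])
    show "addf (\<lambda>b. F b l)" unfolding addf_def using Fa1 by blast
  next
    fix s x assume x: "x \<in> gB s"
    show "F x l \<in> HOM gP (tensor_grading gP gL tp3) lP la3"
    proof (rule graded_induct[OF gL HOMac, of "\<lambda>l. F x l"])
      show "addf (F x)" unfolding addf_def using Fa2 by blast
    next
      fix s' y assume "y \<in> gL s'"
      then show "F x y \<in> HOM gP (tensor_grading gP gL tp3) lP la3"
        using Fhd[OF x] hom_deg_HOM by blast
    qed
  qed
  have BH2ac: "addclosed BH2" unfolding BH2_def by (rule span_act_addclosed)
  have FB: "F b l \<in> BH2" for b l
  proof -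
    obtain xs where xs: "b = sum_list (map (\<lambda>(x,y). x * y) xs)" using idemB unfolding idempotent_ring_def by blast
    have "(\<lambda>b. F b l) (sum_list (map (\<lambda>(x,y). x * y) xs)) \<in> BH2"
    proof (rule addf_sum_list_in[OF _ BH2ac])
      show "addf (\<lambda>b. F b l)" unfolding addf_def using Fa1 by blast
      show "\<forall>z\<in>set xs. F ((\<lambda>(x,y). x * y) z) l \<in> BH2"
      proof
        fix z assume "z \<in> set xs"
        obtain x y where z: "z = (x, y)" by (cases z)
        have "hom_act rP x (F y l) \<in> BH2" unfolding BH2_def by (rule span_act_gen) (rule FH)
        then show "F ((\<lambda>(x,y). x * y) z) l \<in> BH2" using z Fhact by simp
      qed
    qed
    then show ?thesis using xs by simp
  qed
  obtain \<gamma> where g_add: "\<forall>s t. \<gamma> (s + t) = \<gamma> s + \<gamma> t" and g_gen: "\<forall>u\<in>UNIV. \<forall>y\<in>UNIV. \<gamma> (tp2 u y) = F u y"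
    using tensor_lift[OF T2(1), of F] Fa1 Fa2 Fb by blast
  have g_addf: "addf \<gamma>" unfolding addf_def using g_add by blast
  have c1: "\<forall>b l. \<gamma> (tp2 b l) = (\<lambda>p. tp3 (rP p b) l)" using g_gen unfolding F_def by blast
  have c3: "\<gamma> (lb2 b t) = hom_act rP b (\<gamma> t)" for b t
  proof (rule tensor_induct[OF T2(1), of "\<lambda>t. \<gamma> (lb2 b t) = hom_act rP b (\<gamma> t)"])
    show "\<gamma> (lb2 b 0) = hom_act rP b (\<gamma> 0)"
      using addf_0[OF lb2_add] addf_0[OF g_addf] hom_act_zero by metis
  next
    fix s t assume "\<gamma> (lb2 b s) = hom_act rP b (\<gamma> s)" "\<gamma> (lb2 b t) = hom_act rP b (\<gamma> t)"
    then show "\<gamma> (lb2 b (s + t)) = hom_act rP b (\<gamma> (s + t))"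
      using T2(3) g_add addf_hom_act[of rP b] unfolding addf_def by metis
  next
    fix u y show "\<gamma> (lb2 b (tp2 u y)) = hom_act rP b (\<gamma> (tp2 u y))"
      using T2(2) g_gen Fhact by simp
  qed
  have c4: "\<gamma> ` tensor_grading gB gL tp2 s \<subseteq> BH2 \<inter> hom_deg gP (tensor_grading gP gL tp3) lP la3 (s * 1)" for s
  proof
    fix w assume "w \<in> \<gamma> ` tensor_grading gB gL tp2 s"
    then obtain xs where w: "w = \<gamma> (sum_list (map (\<lambda>(u,y). tp2 u y) xs))"
      and xs: "\<forall>z\<in>set xs. \<exists>a b. fst z \<in> gB a \<and> snd z \<in> gL b \<and> a * b = s"
      unfolding tensor_grading_def by blast
    have "\<gamma> (sum_list (map (\<lambda>(u,y). tp2 u y) xs)) \<in> BH2 \<inter> hom_deg gP (tensor_grading gP gL tp3) lP la3 (s * 1)"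
    proof (rule addf_sum_list_in[OF g_addf addclosed_Int[OF BH2ac hdac]])
      show "\<forall>z\<in>set xs. \<gamma> ((\<lambda>(u,y). tp2 u y) z) \<in> BH2 \<inter> hom_deg gP (tensor_grading gP gL tp3) lP la3 (s * 1)"
      proof
        fix z assume "z \<in> set xs"
        then obtain a b where ab: "fst z \<in> gB a" "snd z \<in> gL b" "a * b = s" using xs by blast
        obtain u y where z: "z = (u, y)" by (cases z)
        have "F u y \<in> hom_deg gP (tensor_grading gP gL tp3) lP la3 (s * 1)"
          using Fhd[of u a y b] ab z by simp
        then show "\<gamma> ((\<lambda>(u,y). tp2 u y) z) \<in> BH2 \<inter> hom_deg gP (tensor_grading gP gL tp3) lP la3 (s * 1)"
          using z g_gen FB by simp
      qed
    qed
    then show "w \<in> BH2 \<inter> hom_deg gP (tensor_grading gP gL tp3) lP la3 (s * 1)" using w by simp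
  qed
  have rg_ac: "addclosed (range \<gamma>)" by (rule addclosed_range[OF g_addf])
  have c5a: "\<gamma> t \<in> BH2" for t
  proof (rule tensor_induct[OF T2(1), of "\<lambda>t. \<gamma> t \<in> BH2"])
    show "\<gamma> 0 \<in> BH2" using addf_0[OF g_addf] BH2ac unfolding addclosed_def by simp
  next
    fix s t assume "\<gamma> s \<in> BH2" "\<gamma> t \<in> BH2" then show "\<gamma> (s + t) \<in> BH2"
      using g_add BH2ac unfolding addclosed_def by simp
  next
    fix u y show "\<gamma> (tp2 u y) \<in> BH2" using g_gen FB by simp
  qed
  have c5b: "h \<in> range \<gamma>" if hB: "h \<in> BH2" for h
  proof -
    obtain xs where h: "h = sum_list (map (\<lambda>(b,h). hom_act rP b h) xs)"
      and xs: "\<forall>z\<in>set xs. snd z \<in> HOM gP (tensor_grading gP gL tp3) lP la3"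
      using hB unfolding BH2_def span_act_def by blast
    have one: "hom_act rP b h \<in> range \<gamma>" if hH: "h \<in> HOM gP (tensor_grading gP gL tp3) lP la3" for b h
    proof -
      have h_add: "addf h" and h_lin: "\<And>a x. h (lP a x) = la3 a (h x)"
        using HOM_lin[OF hH] T3(3) by blast+
      have nuq: "hom_act rP (nu q p') h \<in> range \<gamma>" for q p'
      proof -
        have "\<exists>t. \<forall>m. \<gamma> t m = la3 (mu m q) w" for w
        proof (rule tensor_induct[OF T3(1), of "\<lambda>w. \<exists>t. \<forall>m. \<gamma> t m = la3 (mu m q) w"])
          show "\<exists>t. \<forall>m. \<gamma> t m = la3 (mu m q) 0"
            using addf_0[OF g_addf] addf_0[OF la3_add] by (intro exI[of _ 0]) simp
        next
          fix s t assume "\<exists>t. \<forall>m. \<gamma> t m = la3 (mu m q) s" "\<exists>ta. \<forall>m. \<gamma> ta m = la3 (mu m q) t"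
          then obtain t1 t2 where "\<forall>m. \<gamma> t1 m = la3 (mu m q) s" "\<forall>m. \<gamma> t2 m = la3 (mu m q) t" by blast
          then show "\<exists>ta. \<forall>m. \<gamma> ta m = la3 (mu m q) (s + t)"
            using g_add T3(3) by (intro exI[of _ "t1 + t2"]) simp
        next
          fix u y
          show "\<exists>t. \<forall>m. \<gamma> t m = la3 (mu m q) (tp3 u y)"
            using g_gen T3(2) as1 unfolding F_def by (intro exI[of _ "tp2 (nu q u) y"]) simp
        qed
        then obtain t where t: "\<forall>m. \<gamma> t m = la3 (mu m q) (h p')" by blast
        have "\<gamma> t = hom_act rP (nu q p') h"
          unfolding hom_act_def using t h_lin as1 by (simp add: fun_eq_iff)
        then show ?thesis by (metis rangeI)
      qed
      obtain ys where b: "b = sum_list (map (\<lambda>(q,p). nu q p) ys)" using trB by blast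
      have "(\<lambda>b. hom_act rP b h) (sum_list (map (\<lambda>(q,p). nu q p) ys)) \<in> range \<gamma>"
      proof (rule addf_sum_list_in[OF _ rg_ac])
        show "addf (\<lambda>b. hom_act rP b h)" unfolding addf_def hom_act_def
          using rP_add1 h_add unfolding addf_def by (simp add: fun_eq_iff)
        show "\<forall>z\<in>set ys. hom_act rP ((\<lambda>(q,p). nu q p) z) h \<in> range \<gamma>"
          using nuq by auto
      qed
      then show ?thesis using b by simp
    qed
    have "(\<lambda>x. x) (sum_list (map (\<lambda>(b,h). hom_act rP b h) xs)) \<in> range \<gamma>"
    proof (rule addf_sum_list_in[OF addf_id rg_ac])
      show "\<forall>z\<in>set xs. (\<lambda>(b,h). hom_act rP b h) z \<in> range \<gamma>" using xs one by auto
    qed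
    then show ?thesis using h by simp
  qed
  have c5: "range \<gamma> = BH2" using c5a c5b by blast
  have c6: "lb2 b t = 0" if t0: "\<gamma> t = 0" for t b
  proof -
    have one: "lb2 (nu q p) t = 0" for q p
    proof -
      have "\<exists>\<psi>. (\<forall>s t. \<psi> (s + t) = \<psi> s + \<psi> t) \<and> (\<forall>u\<in>UNIV. \<forall>y\<in>UNIV. \<psi> (tp3 u y) = tp2 (nu q u) y)"
      proof (rule tensor_lift[OF T3(1), where F = "\<lambda>u y. tp2 (nu q u) y"])
        show "\<forall>u\<in>UNIV. \<forall>u'\<in>UNIV. \<forall>y\<in>UNIV. tp2 (nu q (u + u')) y = tp2 (nu q u) y + tp2 (nu q u') y"
          using nu_add2 t2a1 by metis
        show "\<forall>u\<in>UNIV. \<forall>y\<in>UNIV. \<forall>y'\<in>UNIV. tp2 (nu q u) (y + y') = tp2 (nu q u) y + tp2 (nu q u) y'"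
          using t2a2 by metis
        show "\<forall>u\<in>UNIV. \<forall>y\<in>UNIV. \<forall>r. rP u r \<in> UNIV \<and> lL r y \<in> UNIV \<longrightarrow> tp2 (nu q (rP u r)) y = tp2 (nu q u) (lL r y)"
          using nu_r t2b by metis
      qed
      then obtain \<psi> where pp: "(\<forall>s t. \<psi> (s + t) = \<psi> s + \<psi> t) \<and> (\<forall>u\<in>UNIV. \<forall>y\<in>UNIV. \<psi> (tp3 u y) = tp2 (nu q u) y)"
        by (rule exE)
      have p_add: "\<forall>s t. \<psi> (s + t) = \<psi> s + \<psi> t" using pp by (rule conjunct1)
      have p_gen: "\<forall>u\<in>UNIV. \<forall>y\<in>UNIV. \<psi> (tp3 u y) = tp2 (nu q u) y" using pp by (rule conjunct2)
      have p_addf: "addf \<psi>" unfolding addf_def using p_add by blast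
      have "\<psi> (\<gamma> t p) = lb2 (nu q p) t" for t
      proof (rule tensor_induct[OF T2(1), of "\<lambda>t. \<psi> (\<gamma> t p) = lb2 (nu q p) t"])
        show "\<psi> (\<gamma> 0 p) = lb2 (nu q p) 0"
          using addf_0[OF g_addf] addf_0[OF p_addf] addf_0[OF lb2_add] by simp
      next
        fix s t assume "\<psi> (\<gamma> s p) = lb2 (nu q p) s" "\<psi> (\<gamma> t p) = lb2 (nu q p) t"
        then show "\<psi> (\<gamma> (s + t) p) = lb2 (nu q p) (s + t)" using g_add p_add T2(3) by simp
      next
        fix u y show "\<psi> (\<gamma> (tp2 u y) p) = lb2 (nu q p) (tp2 u y)"
          using g_gen p_gen T2(2) nu_r unfolding F_def by simp
      qed
      moreover have "\<gamma> t p = 0" using t0 by simp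
      ultimately show ?thesis using addf_0[OF p_addf] by metis
    qed
    have ladd: "lb2 (b + b') t = lb2 b t + lb2 b' t" for b b'
    proof (rule tensor_induct[OF T2(1), of "\<lambda>t. lb2 (b + b') t = lb2 b t + lb2 b' t"])
      show "lb2 (b + b') 0 = lb2 b 0 + lb2 b' 0" using addf_0[OF lb2_add] by simp
    next
      fix s t assume "lb2 (b + b') s = lb2 b s + lb2 b' s" "lb2 (b + b') t = lb2 b t + lb2 b' t"
      then show "lb2 (b + b') (s + t) = lb2 b (s + t) + lb2 b' (s + t)" using T2(3) by (simp add: ac_simps)
    next
      fix u y show "lb2 (b + b') (tp2 u y) = lb2 b (tp2 u y) + lb2 b' (tp2 u y)"
        using T2(2) t2a1 by (simp add: distrib_right)
    qed
    obtain ys where b: "b = sum_list (map (\<lambda>(q,p). nu q p) ys)" using trB by blast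
    have "(\<lambda>b. lb2 b t) (sum_list (map (\<lambda>(q,p). nu q p) ys)) \<in> {0}"
    proof (rule addf_sum_list_in[OF _ addclosed_zero])
      show "addf (\<lambda>b. lb2 b t)" unfolding addf_def using ladd by blast
      show "\<forall>z\<in>set ys. lb2 ((\<lambda>(q,p). nu q p) z) t \<in> {0}" using one by auto
    qed
    then show ?thesis using b by simp
  qed
  show ?thesis
  proof (intro exI[of _ \<gamma>] conjI)
    show "\<forall>b l. \<gamma> (tp2 b l) = (\<lambda>p. tp3 (rP p b) l)" by (rule c1)
    show "\<forall>s t. \<gamma> (s + t) = \<gamma> s + \<gamma> t" by (rule g_add)
    show "\<forall>b t. \<gamma> (lb2 b t) = hom_act rP b (\<gamma> t)" using c3 by blast
    show "\<forall>s. \<gamma> ` tensor_grading gB gL tp2 s \<subseteq> BH2 \<inter> hom_deg gP (tensor_grading gP gL tp3) lP la3 (s * 1)"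
      using c4 by blast
    show "range \<gamma> = BH2" by (rule c5)
    show "\<forall>t. \<gamma> t = 0 \<longrightarrow> (\<forall>b. lb2 b t = 0)" using c6 by blast
  qed
qed



lemma part1:
  fixes gA :: "'g::mult_group \<Rightarrow> 'a::ring set" and gB :: "'g \<Rightarrow> 'b::ring set"
    and gP :: "'g \<Rightarrow> 'p::ab_group_add set" and gQ :: "'g \<Rightarrow> 'q::ab_group_add set"
    and lP :: "'a \<Rightarrow> 'p \<Rightarrow> 'p" and rP :: "'p \<Rightarrow> 'b \<Rightarrow> 'p"
    and lQ :: "'b \<Rightarrow> 'q \<Rightarrow> 'q" and rQ :: "'q \<Rightarrow> 'a \<Rightarrow> 'q"
    and mu :: "'p \<Rightarrow> 'q \<Rightarrow> 'a" and nu :: "'q \<Rightarrow> 'p \<Rightarrow> 'b"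
    and gK :: "'g \<Rightarrow> 'k::ab_group_add set" and lK :: "'a \<Rightarrow> 'k \<Rightarrow> 'k"
    and tp1 :: "'p \<Rightarrow> ('p \<Rightarrow> 'k) \<Rightarrow> 't1::ab_group_add" and la1 :: "'a \<Rightarrow> 't1 \<Rightarrow> 't1"
  defines "BH \<equiv> span_act (hom_act rP) (HOM gP gK lP lK)"
    and "AH \<equiv> span_act (hom_act (\<lambda>x a. x * a)) (HOM gA gK (\<lambda>a x. a * x) lK)"
  assumes morita: "graded_morita_context gA gB gP gQ lP rP lQ rQ mu nu"
    and traces: "surjective_traces mu nu"
    and K: "graded_lmod gA gK lK"
    and T1: "is_tensor UNIV BH rP (hom_act rP) tp1"
      "\<forall>a p. \<forall>f\<in>BH. la1 a (tp1 p f) = tp1 (lP a p) f"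
      "\<forall>a s t. la1 a (s + t) = la1 a s + la1 a t"
  shows
    "(\<exists>\<phi> :: 't1 \<Rightarrow> ('a \<Rightarrow> 'k).
        (\<forall>p. \<forall>f\<in>BH. \<forall>x. \<phi> (tp1 p f) x = f (lP x p) \<and> f (lP x p) = lK x (f p)) \<and>
        (\<forall>s t. \<phi> (s + t) = \<phi> s + \<phi> t) \<and>
        (\<forall>a t. \<phi> (la1 a t) = hom_act (\<lambda>x a. x * a) a (\<phi> t)) \<and>
        (\<forall>s. \<phi> ` tensor_grading gP (\<lambda>b. BH \<inter> hom_deg gP gK lP lK b) tp1 s
               \<subseteq> AH \<inter> hom_deg gA gK (\<lambda>a x. a * x) lK (s * 1)) \<and>
        range \<phi> = AH \<and>
        (\<forall>t. \<phi> t = 0 \<longrightarrow> (\<forall>a. la1 a t = 0)))"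
proof -
  note defs = graded_morita_context_def graded_lmod_def graded_rmod_def graded_ring_def bimod_compat_def
  have gA: "grading UNIV gA" using morita unfolding defs by (elim conjE) assumption
  have gB: "grading UNIV gB" using morita unfolding defs by (elim conjE) assumption
  have gP: "grading UNIV gP" using morita unfolding defs by (elim conjE) assumption
  have gQ: "grading UNIV gQ" using morita unfolding defs by (elim conjE) assumption
  have gK: "grading UNIV gK" using K unfolding graded_lmod_def by blast
  have lunP: "lunital lP" using morita unfolding defs by (elim conjE) assumption
  have lunQ: "lunital lQ" using morita unfolding defs by (elim conjE) assumption
  have lP_add2: "\<forall>a m n. lP a (m + n) = lP a m + lP a n" using morita unfolding defs by (elim conjE) assumption
  have lP_add1: "\<forall>a b m. lP (a + b) m = lP a m + lP b m" using morita unfolding defs by (elim conjE) assumption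
  have lP_mult: "\<forall>a b m. lP (a * b) m = lP a (lP b m)" using morita unfolding defs by (elim conjE) assumption
  have lP_gr: "\<forall>s t. \<forall>a\<in>gA s. \<forall>m\<in>gP t. lP a m \<in> gP (s * t)" using morita unfolding defs by (elim conjE) assumption
  have rP_add1: "\<forall>m a b. rP m (a + b) = rP m a + rP m b" using morita unfolding defs by (elim conjE) assumption
  have rP_add2: "\<forall>m n a. rP (m + n) a = rP m a + rP n a" using morita unfolding defs by (elim conjE) assumption
  have rP_mult: "\<forall>m a b. rP m (a * b) = rP (rP m a) b" using morita unfolding defs by (elim conjE) assumption
  have rP_gr: "\<forall>s t. \<forall>m\<in>gP s. \<forall>b\<in>gB t. rP m b \<in> gP (s * t)" using morita unfolding defs by (elim conjE) assumption
  have compP: "\<forall>a m b. lP a (rP m b) = rP (lP a m) b" using morita unfolding defs by (elim conjE) assumption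
  have mu_add1: "\<forall>p p' q. mu (p + p') q = mu p q + mu p' q" using morita unfolding defs by (elim conjE) assumption
  have mu_add2: "\<forall>p q q'. mu p (q + q') = mu p q + mu p q'" using morita unfolding defs by (elim conjE) assumption
  have mu_rl: "\<forall>p b q. mu (rP p b) q = mu p (lQ b q)" using morita unfolding defs by (elim conjE) assumption
  have mu_l: "\<forall>a p q. mu (lP a p) q = a * mu p q" using morita unfolding defs by (elim conjE) assumption
  have mu_gr: "\<forall>s t. \<forall>p\<in>gP s. \<forall>q\<in>gQ t. mu p q \<in> gA (s * t)" using morita unfolding defs by (elim conjE) assumption
  have as1: "\<forall>p' q p. rP p' (nu q p) = lP (mu p' q) p" using morita unfolding defs by (elim conjE) assumption
  have trA: "\<forall>a. \<exists>xs. a = sum_list (map (\<lambda>(p,q). mu p q) xs)" using traces unfolding surjective_traces_def by blast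
  have lK_add2: "\<forall>a m n. lK a (m + n) = lK a m + lK a n" using K unfolding graded_lmod_def by (elim conjE) assumption
  have lK_add2': "\<And>a m n. lK a (m + n) = lK a m + lK a n" using lK_add2 by blast
  have t1a1: "\<forall>u\<in>UNIV. \<forall>u'\<in>UNIV. \<forall>y\<in>BH. tp1 (u + u') y = tp1 u y + tp1 u' y" using T1(1) unfolding is_tensor_def by (elim conjE) assumption
  have t1a2: "\<forall>u\<in>UNIV. \<forall>y\<in>BH. \<forall>y'\<in>BH. tp1 u (y + y') = tp1 u y + tp1 u y'" using T1(1) unfolding is_tensor_def by (elim conjE) assumption
  have t1b: "\<forall>u\<in>UNIV. \<forall>y\<in>BH. \<forall>r. rP u r \<in> UNIV \<and> hom_act rP r y \<in> BH \<longrightarrow> tp1 (rP u r) y = tp1 u (hom_act rP r y)"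
    using T1(1) unfolding is_tensor_def by (elim conjE) assumption
  have la1_add: "addf (la1 a)" for a using T1(3) unfolding addf_def by blast
  have KG: "addclosed (gK t)" for t using grading_addclosed[OF gK] .
  have HOMPac: "addclosed (HOM gP gK lP lK)" by (rule HOM_addclosed[OF KG lK_add2'])
  have HOMAac: "addclosed (HOM gA gK (\<lambda>a x. a * x) lK)" by (rule HOM_addclosed[OF KG lK_add2'])
  have hdAac: "addclosed (hom_deg gA gK (\<lambda>a x. a * x) lK s)" for s by (rule hom_deg_addclosed[OF KG lK_add2'])
  have BHac: "addclosed BH" unfolding BH_def by (rule span_act_addclosed)
  have AHac: "addclosed AH" unfolding AH_def by (rule span_act_addclosed)
  have hdP: "hom_act rP b c \<in> hom_deg gP gK lP lK (g * d)" if b: "b \<in> gB g" and c: "c \<in> hom_deg gP gK lP lK d" for b c g d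
  proof -
    have c_add: "c (x + y) = c x + c y" for x y using c unfolding hom_deg_def by blast
    have c_lin: "c (lP a x) = lK a (c x)" for a x using c unfolding hom_deg_def by blast
    have c_gr: "\<forall>t. \<forall>x\<in>gP t. c x \<in> gK (t * d)" using c unfolding hom_deg_def by blast
    have "hom_act rP b c (x + y) = hom_act rP b c x + hom_act rP b c y" for x y
      unfolding hom_act_def using rP_add2 c_add by simp
    moreover have "hom_act rP b c (lP a x) = lK a (hom_act rP b c x)" for a x
    proof -
      have "rP (lP a x) b = lP a (rP x b)" using compP by simp
      then show ?thesis unfolding hom_act_def using c_lin by simp
    qed
    moreover have "hom_act rP b c x \<in> gK (t * (g * d))" if "x \<in> gP t" for x t
    proof -
      have "rP x b \<in> gP (t * g)" using rP_gr that b by blast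
      then have "c (rP x b) \<in> gK (t * g * d)" using c_gr by blast
      then show ?thesis unfolding hom_act_def by (simp add: mult.assoc)
    qed
    ultimately show ?thesis unfolding hom_deg_def by blast
  qed
  have actHOM: "hom_act rP b h \<in> HOM gP gK lP lK" if h: "h \<in> HOM gP gK lP lK" for b h
  proof -
    obtain S c where S: "finite S" "\<forall>s\<in>S. c s \<in> hom_deg gP gK lP lK s" "h = sum c S"
      using h unfolding HOM_def by blast
    have "hom_act rP b (sum c S) = (\<Sum>s\<in>S. hom_act rP b (c s))" by (rule addf_sum[OF addf_hom_act])
    also have "\<dots> \<in> HOM gP gK lP lK"
    proof (rule addclosed_sum[OF HOMPac], intro ballI)
      fix s assume "s \<in> S"
      then have cs: "c s \<in> hom_deg gP gK lP lK s" using S by blast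
      have cadd: "c s (x + y) = c s x + c s y" for x y using cs unfolding hom_deg_def by blast
      show "hom_act rP b (c s) \<in> HOM gP gK lP lK"
      proof (rule graded_induct[OF gB HOMPac, of "\<lambda>b. hom_act rP b (c s)"])
        show "addf (\<lambda>b. hom_act rP b (c s))" unfolding addf_def hom_act_def
          using rP_add1 cadd by (simp add: fun_eq_iff)
      next
        fix g x assume "x \<in> gB g"
        then show "hom_act rP x (c s) \<in> HOM gP gK lP lK" using hdP cs hom_deg_HOM by blast
      qed
    qed
    finally show ?thesis using S(3) by simp
  qed
  have BHsub: "f \<in> HOM gP gK lP lK" if f: "f \<in> BH" for f
  proof -
    obtain xs where xs: "f = sum_list (map (\<lambda>(b,h). hom_act rP b h) xs)" "\<forall>z\<in>set xs. snd z \<in> HOM gP gK lP lK"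
      using f unfolding BH_def span_act_def by blast
    have "(\<lambda>x. x) (sum_list (map (\<lambda>(b,h). hom_act rP b h) xs)) \<in> HOM gP gK lP lK"
      by (rule addf_sum_list_in[OF addf_id HOMPac]) (use xs(2) actHOM in auto)
    then show ?thesis using xs(1) by simp
  qed
  have BHadd: "addf f" and BHlin: "\<And>a x. f (lP a x) = lK a (f x)" if f: "f \<in> BH" for f
    using HOM_lin[OF BHsub[OF f] lK_add2'] by blast+
  have BHact: "hom_act rP b f \<in> BH" if f: "f \<in> BH" for b f
  proof -
    obtain xs where xs: "f = sum_list (map (\<lambda>(b,h). hom_act rP b h) xs)" "\<forall>z\<in>set xs. snd z \<in> HOM gP gK lP lK"
      using f unfolding BH_def span_act_def by blast
    have "hom_act rP b (sum_list (map (\<lambda>(b,h). hom_act rP b h) xs)) \<in> BH"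
    proof (rule addf_sum_list_in[OF addf_hom_act BHac], intro ballI)
      fix z assume z: "z \<in> set xs"
      obtain b' h where zz: "z = (b', h)" by (cases z)
      have "hom_act rP b (hom_act rP b' h) = hom_act rP (b * b') h"
        unfolding hom_act_def using rP_mult by simp
      moreover have "hom_act rP (b * b') h \<in> BH" unfolding BH_def
        by (rule span_act_gen) (use xs(2) z zz in auto)
      ultimately show "hom_act rP b ((\<lambda>(b,h). hom_act rP b h) z) \<in> BH" using zz by simp
    qed
    then show ?thesis using xs(1) by simp
  qed
  define F where "F p f = (\<lambda>x. f (lP x p))" for p :: 'p and f :: "'p \<Rightarrow> 'k"
  have FhdA: "F m c \<in> hom_deg gA gK (\<lambda>a x. a * x) lK (e * d)" if m: "m \<in> gP e" and c: "c \<in> hom_deg gP gK lP lK d" for m c e d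
  proof -
    have c_add: "c (x + y) = c x + c y" for x y using c unfolding hom_deg_def by blast
    have c_lin: "c (lP a x) = lK a (c x)" for a x using c unfolding hom_deg_def by blast
    have c_gr: "\<forall>t. \<forall>x\<in>gP t. c x \<in> gK (t * d)" using c unfolding hom_deg_def by blast
    have "F m c (x + y) = F m c x + F m c y" for x y
      unfolding F_def using lP_add1 c_add by simp
    moreover have "F m c (a * x) = lK a (F m c x)" for a x
      unfolding F_def using lP_mult c_lin by simp
    moreover have "F m c x \<in> gK (t * (e * d))" if "x \<in> gA t" for x t
    proof -
      have "lP x m \<in> gP (t * e)" using lP_gr that m by blast
      then have "c (lP x m) \<in> gK (t * e * d)" using c_gr by blast
      then show ?thesis unfolding F_def by (simp add: mult.assoc)
    qed
    ultimately show ?thesis unfolding hom_deg_def by blast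
  qed
  have FHOM: "F m f \<in> HOM gA gK (\<lambda>a x. a * x) lK" if f: "f \<in> HOM gP gK lP lK" for m f
  proof -
    obtain S c where S: "finite S" "\<forall>s\<in>S. c s \<in> hom_deg gP gK lP lK s" "f = sum c S"
      using f unfolding HOM_def by blast
    have Fadd: "addf (F m)" unfolding addf_def F_def by auto
    have "F m (sum c S) = (\<Sum>s\<in>S. F m (c s))" by (rule addf_sum[OF Fadd])
    also have "\<dots> \<in> HOM gA gK (\<lambda>a x. a * x) lK"
    proof (rule addclosed_sum[OF HOMAac], intro ballI)
      fix s assume "s \<in> S"
      then have cs: "c s \<in> hom_deg gP gK lP lK s" using S by blast
      have cadd: "c s (x + y) = c s x + c s y" for x y using cs unfolding hom_deg_def by blast
      show "F m (c s) \<in> HOM gA gK (\<lambda>a x. a * x) lK"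
      proof (rule graded_induct[OF gP HOMAac, of "\<lambda>m. F m (c s)"])
        show "addf (\<lambda>m. F m (c s))" unfolding addf_def F_def
          using lP_add2 cadd by (simp add: fun_eq_iff)
      next
        fix g x assume "x \<in> gP g"
        then show "F x (c s) \<in> HOM gA gK (\<lambda>a x. a * x) lK" using FhdA cs hom_deg_HOM by blast
      qed
    qed
    finally show ?thesis using S(3) by simp
  qed
  have FAH: "F p f \<in> AH" if f: "f \<in> BH" for p f
  proof -
    obtain xs where xs: "p = sum_list (map (\<lambda>(a,n). lP a n) xs)" using lunP unfolding lunital_def by blast
    have fadd: "f (x + y) = f x + f y" for x y using BHadd[OF f] unfolding addf_def by blast
    have "(\<lambda>p. F p f) (sum_list (map (\<lambda>(a,n). lP a n) xs)) \<in> AH"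
    proof (rule addf_sum_list_in[OF _ AHac])
      show "addf (\<lambda>p. F p f)" unfolding addf_def F_def using lP_add2 fadd by (simp add: fun_eq_iff)
      show "\<forall>z\<in>set xs. F ((\<lambda>(a,n). lP a n) z) f \<in> AH"
      proof
        fix z assume "z \<in> set xs"
        obtain a n where zz: "z = (a, n)" by (cases z)
        have "F (lP a n) f = hom_act (\<lambda>x a. x * a) a (F n f)"
          unfolding F_def hom_act_def using lP_mult by simp
        moreover have "hom_act (\<lambda>x a. x * a) a (F n f) \<in> AH" unfolding AH_def
          by (rule span_act_gen) (rule FHOM[OF BHsub[OF f]])
        ultimately show "F ((\<lambda>(a,n). lP a n) z) f \<in> AH" using zz by simp
      qed
    qed
    then show ?thesis using xs by simp
  qed
  have "\<exists>\<phi>. (\<forall>s t. \<phi> (s + t) = \<phi> s + \<phi> t) \<and> (\<forall>u\<in>UNIV. \<forall>y\<in>BH. \<phi> (tp1 u y) = F u y)"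
  proof (rule tensor_lift[OF T1(1), where F = F])
    show "\<forall>u\<in>UNIV. \<forall>u'\<in>UNIV. \<forall>y\<in>BH. F (u + u') y = F u y + F u' y"
    proof (intro ballI)
      fix u u' y assume "y \<in> BH"
      then have "y (x + x') = y x + y x'" for x x' using BHadd unfolding addf_def by blast
      then show "F (u + u') y = F u y + F u' y" unfolding F_def using lP_add2 by (simp add: fun_eq_iff)
    qed
    show "\<forall>u\<in>UNIV. \<forall>y\<in>BH. \<forall>y'\<in>BH. F u (y + y') = F u y + F u y'"
      unfolding F_def by (simp add: fun_eq_iff)
    show "\<forall>u\<in>UNIV. \<forall>y\<in>BH. \<forall>r. rP u r \<in> UNIV \<and> hom_act rP r y \<in> BH \<longrightarrow> F (rP u r) y = F u (hom_act rP r y)"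
      unfolding F_def hom_act_def using compP by simp
  qed
  then obtain \<phi> where pp: "(\<forall>s t. \<phi> (s + t) = \<phi> s + \<phi> t) \<and> (\<forall>u\<in>UNIV. \<forall>y\<in>BH. \<phi> (tp1 u y) = F u y)"
    by (rule exE)
  have g_add: "\<forall>s t. \<phi> (s + t) = \<phi> s + \<phi> t" using pp by (rule conjunct1)
  have g_gen: "\<forall>u\<in>UNIV. \<forall>y\<in>BH. \<phi> (tp1 u y) = F u y" using pp by (rule conjunct2)
  have g_addf: "addf \<phi>" unfolding addf_def using g_add by blast
  have c1: "\<forall>p. \<forall>f\<in>BH. \<forall>x. \<phi> (tp1 p f) x = f (lP x p) \<and> f (lP x p) = lK x (f p)"
    using g_gen BHlin unfolding F_def by simp
  have c3: "\<phi> (la1 a t) = hom_act (\<lambda>x a. x * a) a (\<phi> t)" for a t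
  proof (rule tensor_induct[OF T1(1), of "\<lambda>t. \<phi> (la1 a t) = hom_act (\<lambda>x a. x * a) a (\<phi> t)"])
    show "\<phi> (la1 a 0) = hom_act (\<lambda>x a. x * a) a (\<phi> 0)"
      using addf_0[OF la1_add] addf_0[OF g_addf] hom_act_zero by metis
  next
    fix s t assume "\<phi> (la1 a s) = hom_act (\<lambda>x a. x * a) a (\<phi> s)" "\<phi> (la1 a t) = hom_act (\<lambda>x a. x * a) a (\<phi> t)"
    then show "\<phi> (la1 a (s + t)) = hom_act (\<lambda>x a. x * a) a (\<phi> (s + t))"
      using T1(3) g_add addf_hom_act[of "\<lambda>x a. x * a" a] unfolding addf_def by metis
  next
    fix u :: 'p and y assume "u \<in> UNIV" "y \<in> BH"
    then show "\<phi> (la1 a (tp1 u y)) = hom_act (\<lambda>x a. x * a) a (\<phi> (tp1 u y))"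
      using T1(2) g_gen lP_mult unfolding F_def hom_act_def by simp
  qed
  have c4: "\<phi> ` tensor_grading gP (\<lambda>b. BH \<inter> hom_deg gP gK lP lK b) tp1 s
               \<subseteq> AH \<inter> hom_deg gA gK (\<lambda>a x. a * x) lK (s * 1)" for s
  proof
    fix w assume "w \<in> \<phi> ` tensor_grading gP (\<lambda>b. BH \<inter> hom_deg gP gK lP lK b) tp1 s"
    then obtain xs where w: "w = \<phi> (sum_list (map (\<lambda>(u,y). tp1 u y) xs))"
      and xs: "\<forall>z\<in>set xs. \<exists>a b. fst z \<in> gP a \<and> snd z \<in> BH \<inter> hom_deg gP gK lP lK b \<and> a * b = s"
      unfolding tensor_grading_def by blast
    have "\<phi> (sum_list (map (\<lambda>(u,y). tp1 u y) xs)) \<in> AH \<inter> hom_deg gA gK (\<lambda>a x. a * x) lK (s * 1)"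
    proof (rule addf_sum_list_in[OF g_addf addclosed_Int[OF AHac hdAac]])
      show "\<forall>z\<in>set xs. \<phi> ((\<lambda>(u,y). tp1 u y) z) \<in> AH \<inter> hom_deg gA gK (\<lambda>a x. a * x) lK (s * 1)"
      proof
        fix z assume "z \<in> set xs"
        then obtain a b where ab: "fst z \<in> gP a" "snd z \<in> BH" "snd z \<in> hom_deg gP gK lP lK b" "a * b = s" using xs by blast
        obtain u y where z: "z = (u, y)" by (cases z)
        have "F u y \<in> hom_deg gA gK (\<lambda>a x. a * x) lK (s * 1)"
          using FhdA[of u a y b] ab z by simp
        moreover have "F u y \<in> AH" using FAH ab z by simp
        moreover have "\<phi> (tp1 u y) = F u y" using g_gen ab z by simp
        ultimately show "\<phi> ((\<lambda>(u,y). tp1 u y) z) \<in> AH \<inter> hom_deg gA gK (\<lambda>a x. a * x) lK (s * 1)"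
          using z by simp
      qed
    qed
    then show "w \<in> AH \<inter> hom_deg gA gK (\<lambda>a x. a * x) lK (s * 1)" using w by simp
  qed
  have rg_ac: "addclosed (range \<phi>)" by (rule addclosed_range[OF g_addf])
  have c5a: "\<phi> t \<in> AH" for t
  proof (rule tensor_induct[OF T1(1), of "\<lambda>t. \<phi> t \<in> AH"])
    show "\<phi> 0 \<in> AH" using addf_0[OF g_addf] AHac unfolding addclosed_def by simp
  next
    fix s t assume "\<phi> s \<in> AH" "\<phi> t \<in> AH" then show "\<phi> (s + t) \<in> AH"
      using g_add AHac unfolding addclosed_def by simp
  next
    fix u :: 'p and y assume "u \<in> UNIV" "y \<in> BH" then show "\<phi> (tp1 u y) \<in> AH" using g_gen FAH by simp
  qed
  have c5b: "h \<in> range \<phi>" if hA: "h \<in> AH" for h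
  proof -
    obtain xs where h: "h = sum_list (map (\<lambda>(a,h). hom_act (\<lambda>x a. x * a) a h) xs)"
      and xs: "\<forall>z\<in>set xs. snd z \<in> HOM gA gK (\<lambda>a x. a * x) lK"
      using hA unfolding AH_def span_act_def by blast
    have one: "hom_act (\<lambda>x a. x * a) a h \<in> range \<phi>" if hH: "h \<in> HOM gA gK (\<lambda>a x. a * x) lK" for a h
    proof -
      have h_add: "addf h" and h_lin: "\<And>a x. h (a * x) = lK a (h x)"
        using HOM_lin[OF hH lK_add2'] by blast+
      have hadd: "h (x + y) = h x + h y" for x y using h_add unfolding addf_def by blast
      define G where "G q = (\<lambda>m. h (mu m q))" for q
      have Gadd: "addf G" unfolding addf_def G_def using mu_add2 hadd by (simp add: fun_eq_iff)
      have GHOM: "G q \<in> HOM gP gK lP lK" for q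
      proof -
        obtain S c where S: "finite S" "\<forall>s\<in>S. c s \<in> hom_deg gA gK (\<lambda>a x. a * x) lK s" "h = sum c S"
          using hH unfolding HOM_def by blast
        have "G q = (\<Sum>s\<in>S. (\<lambda>m. c s (mu m q)))" unfolding G_def S(3) by (simp add: fun_eq_iff fun_sum_apply)
        also have "\<dots> \<in> HOM gP gK lP lK"
        proof (rule addclosed_sum[OF HOMPac], intro ballI)
          fix s assume "s \<in> S"
          then have cs: "c s \<in> hom_deg gA gK (\<lambda>a x. a * x) lK s" using S by blast
          have cadd: "c s (x + y) = c s x + c s y" for x y using cs unfolding hom_deg_def by blast
          have clin: "c s (a * x) = lK a (c s x)" for a x using cs unfolding hom_deg_def by blast
          have cgr: "\<forall>t. \<forall>x\<in>gA t. c s x \<in> gK (t * s)" using cs unfolding hom_deg_def by blast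
          show "(\<lambda>m. c s (mu m q)) \<in> HOM gP gK lP lK"
          proof (rule graded_induct[OF gQ HOMPac, of "\<lambda>q. (\<lambda>m. c s (mu m q))"])
            show "addf (\<lambda>q. (\<lambda>m. c s (mu m q)))" unfolding addf_def
              using mu_add2 cadd by (simp add: fun_eq_iff)
          next
            fix e q' assume q': "q' \<in> gQ e"
            have "(\<lambda>m. c s (mu m q')) \<in> hom_deg gP gK lP lK (e * s)"
            proof -
              have "c s (mu (x + y) q') = c s (mu x q') + c s (mu y q')" for x y using mu_add1 cadd by simp
              moreover have "c s (mu (lP a x) q') = lK a (c s (mu x q'))" for a x using mu_l clin by simp
              moreover have "c s (mu x q') \<in> gK (t * (e * s))" if "x \<in> gP t" for x t
              proof -
                have "mu x q' \<in> gA (t * e)" using mu_gr that q' by blast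
                then have "c s (mu x q') \<in> gK (t * e * s)" using cgr by blast
                then show ?thesis by (simp add: mult.assoc)
              qed
              ultimately show ?thesis unfolding hom_deg_def by blast
            qed
            then show "(\<lambda>m. c s (mu m q')) \<in> HOM gP gK lP lK" by (rule hom_deg_HOM)
          qed
        qed
        finally show ?thesis .
      qed
      have GBH: "G q \<in> BH" for q
      proof -
        obtain zs where zs: "q = sum_list (map (\<lambda>(b,n). lQ b n) zs)" using lunQ unfolding lunital_def by blast
        have "G (sum_list (map (\<lambda>(b,n). lQ b n) zs)) \<in> BH"
        proof (rule addf_sum_list_in[OF Gadd BHac], intro ballI)
          fix z assume "z \<in> set zs"
          obtain b n where zz: "z = (b, n)" by (cases z)
          have "G (lQ b n) = hom_act rP b (G n)" unfolding G_def hom_act_def using mu_rl by simp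
          moreover have "hom_act rP b (G n) \<in> BH" unfolding BH_def by (rule span_act_gen) (rule GHOM)
          ultimately show "G ((\<lambda>(b,n). lQ b n) z) \<in> BH" using zz by simp
        qed
        then show ?thesis using zs by simp
      qed
      have muq: "hom_act (\<lambda>x a. x * a) (mu p q) h \<in> range \<phi>" for p q
      proof -
        have "\<phi> (tp1 p (G q)) = F p (G q)" using g_gen GBH by simp
        also have "\<dots> = hom_act (\<lambda>x a. x * a) (mu p q) h"
          unfolding F_def G_def hom_act_def using mu_l by simp
        finally show ?thesis by (metis rangeI)
      qed
      obtain ys where a: "a = sum_list (map (\<lambda>(p,q). mu p q) ys)" using trA by blast
      have "(\<lambda>a. hom_act (\<lambda>x a. x * a) a h) (sum_list (map (\<lambda>(p,q). mu p q) ys)) \<in> range \<phi>"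
      proof (rule addf_sum_list_in[OF _ rg_ac])
        show "addf (\<lambda>a. hom_act (\<lambda>x a. x * a) a h)" unfolding addf_def hom_act_def
          using hadd by (simp add: fun_eq_iff distrib_left)
        show "\<forall>z\<in>set ys. hom_act (\<lambda>x a. x * a) ((\<lambda>(p,q). mu p q) z) h \<in> range \<phi>"
          using muq by auto
      qed
      then show ?thesis using a by simp
    qed
    have "(\<lambda>x. x) (sum_list (map (\<lambda>(a,h). hom_act (\<lambda>x a. x * a) a h) xs)) \<in> range \<phi>"
    proof (rule addf_sum_list_in[OF addf_id rg_ac])
      show "\<forall>z\<in>set xs. (\<lambda>(a,h). hom_act (\<lambda>x a. x * a) a h) z \<in> range \<phi>" using xs one by auto
    qed
    then show ?thesis using h by simp
  qed
  have c5: "range \<phi> = AH" using c5a c5b by blast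
  have tp1_0: "tp1 p 0 = 0" for p
  proof -
    have "(0::'p \<Rightarrow> 'k) \<in> BH" using BHac unfolding addclosed_def by blast
    then have "tp1 p (0 + 0) = tp1 p 0 + tp1 p 0" using t1a2 by blast
    then show ?thesis by simp
  qed
  have c6: "la1 a t = 0" if t0: "\<phi> t = 0" for t a
  proof -
    have key: "\<exists>g\<in>BH. (\<forall>p. la1 (mu p q) t = tp1 p g) \<and> (\<forall>m. g m = \<phi> t (mu m q))" for q t
    proof (rule tensor_induct[OF T1(1), of "\<lambda>t. \<exists>g\<in>BH. (\<forall>p. la1 (mu p q) t = tp1 p g) \<and> (\<forall>m. g m = \<phi> t (mu m q))"])
      show "\<exists>g\<in>BH. (\<forall>p. la1 (mu p q) 0 = tp1 p g) \<and> (\<forall>m. g m = \<phi> 0 (mu m q))"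
      proof (intro bexI[of _ 0] conjI allI)
        show "(0::'p \<Rightarrow> 'k) \<in> BH" using BHac unfolding addclosed_def by blast
        show "la1 (mu p q) 0 = tp1 p 0" for p using addf_0[OF la1_add] tp1_0 by simp
        show "(0::'p \<Rightarrow> 'k) m = \<phi> 0 (mu m q)" for m using addf_0[OF g_addf] by simp
      qed
    next
      fix s t
      assume "\<exists>g\<in>BH. (\<forall>p. la1 (mu p q) s = tp1 p g) \<and> (\<forall>m. g m = \<phi> s (mu m q))"
        "\<exists>g\<in>BH. (\<forall>p. la1 (mu p q) t = tp1 p g) \<and> (\<forall>m. g m = \<phi> t (mu m q))"
      then obtain g g' where g: "g \<in> BH" "\<forall>p. la1 (mu p q) s = tp1 p g" "\<forall>m. g m = \<phi> s (mu m q)"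
        and g': "g' \<in> BH" "\<forall>p. la1 (mu p q) t = tp1 p g'" "\<forall>m. g' m = \<phi> t (mu m q)" by blast
      show "\<exists>g\<in>BH. (\<forall>p. la1 (mu p q) (s + t) = tp1 p g) \<and> (\<forall>m. g m = \<phi> (s + t) (mu m q))"
      proof (intro bexI[of _ "g + g'"] conjI allI)
        show "g + g' \<in> BH" using BHac g(1) g'(1) unfolding addclosed_def by blast
        show "la1 (mu p q) (s + t) = tp1 p (g + g')" for p
          using T1(3) g(1,2) g'(1,2) t1a2 by simp
        show "(g + g') m = \<phi> (s + t) (mu m q)" for m using g(3) g'(3) g_add by simp
      qed
    next
      fix u :: 'p and y assume y: "u \<in> UNIV" "y \<in> BH"
      show "\<exists>g\<in>BH. (\<forall>p. la1 (mu p q) (tp1 u y) = tp1 p g) \<and> (\<forall>m. g m = \<phi> (tp1 u y) (mu m q))"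
      proof (intro bexI[of _ "hom_act rP (nu q u) y"] conjI allI)
        show hb: "hom_act rP (nu q u) y \<in> BH" by (rule BHact[OF y(2)])
        show "la1 (mu p q) (tp1 u y) = tp1 p (hom_act rP (nu q u) y)" for p
        proof -
          have "la1 (mu p q) (tp1 u y) = tp1 (lP (mu p q) u) y" using T1(2) y(2) by blast
          also have "\<dots> = tp1 (rP p (nu q u)) y" using as1 by simp
          also have "\<dots> = tp1 p (hom_act rP (nu q u) y)" using t1b y(2) hb by blast
          finally show ?thesis .
        qed
        show "hom_act rP (nu q u) y m = \<phi> (tp1 u y) (mu m q)" for m
          using g_gen y as1 unfolding F_def hom_act_def by simp
      qed
    qed
    have one: "la1 (mu p q) t = 0" for p q
    proof -
      obtain g where g: "g \<in> BH" "\<forall>p. la1 (mu p q) t = tp1 p g" "\<forall>m. g m = \<phi> t (mu m q)"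
        using key[of q t] by blast
      have "g = 0" using g(3) t0 by (simp add: fun_eq_iff)
      then show ?thesis using g(2) tp1_0 by simp
    qed
    have ladd: "la1 (a + a') t = la1 a t + la1 a' t" for a a'
    proof (rule tensor_induct[OF T1(1), of "\<lambda>t. la1 (a + a') t = la1 a t + la1 a' t"])
      show "la1 (a + a') 0 = la1 a 0 + la1 a' 0" using addf_0[OF la1_add] by simp
    next
      fix s t assume "la1 (a + a') s = la1 a s + la1 a' s" "la1 (a + a') t = la1 a t + la1 a' t"
      then show "la1 (a + a') (s + t) = la1 a (s + t) + la1 a' (s + t)" using T1(3) by (simp add: ac_simps)
    next
      fix u :: 'p and y assume "u \<in> UNIV" "y \<in> BH"
      then show "la1 (a + a') (tp1 u y) = la1 a (tp1 u y) + la1 a' (tp1 u y)"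
        using T1(2) t1a1 lP_add1 by simp
    qed
    obtain ys where a: "a = sum_list (map (\<lambda>(p,q). mu p q) ys)" using trA by blast
    have "(\<lambda>a. la1 a t) (sum_list (map (\<lambda>(p,q). mu p q) ys)) \<in> {0}"
    proof (rule addf_sum_list_in[OF _ addclosed_zero])
      show "addf (\<lambda>a. la1 a t)" unfolding addf_def using ladd by blast
      show "\<forall>z\<in>set ys. la1 ((\<lambda>(p,q). mu p q) z) t \<in> {0}" using one by auto
    qed
    then show ?thesis using a by simp
  qed
  show ?thesis
  proof (intro exI[of _ \<phi>] conjI)
    show "\<forall>p. \<forall>f\<in>BH. \<forall>x. \<phi> (tp1 p f) x = f (lP x p) \<and> f (lP x p) = lK x (f p)" by (rule c1)
    show "\<forall>s t. \<phi> (s + t) = \<phi> s + \<phi> t" by (rule g_add)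
    show "\<forall>a t. \<phi> (la1 a t) = hom_act (\<lambda>x a. x * a) a (\<phi> t)" using c3 by blast
    show "\<forall>s. \<phi> ` tensor_grading gP (\<lambda>b. BH \<inter> hom_deg gP gK lP lK b) tp1 s
               \<subseteq> AH \<inter> hom_deg gA gK (\<lambda>a x. a * x) lK (s * 1)" using c4 by blast
    show "range \<phi> = AH" by (rule c5)
    show "\<forall>t. \<phi> t = 0 \<longrightarrow> (\<forall>a. la1 a t = 0)" using c6 by blast
  qed
qed

theorem proposition5p3:
  fixes gA :: "'g::mult_group \<Rightarrow> 'a::ring set" and gB :: "'g \<Rightarrow> 'b::ring set"
    and gP :: "'g \<Rightarrow> 'p::ab_group_add set" and gQ :: "'g \<Rightarrow> 'q::ab_group_add set"
    and lP :: "'a \<Rightarrow> 'p \<Rightarrow> 'p" and rP :: "'p \<Rightarrow> 'b \<Rightarrow> 'p"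
    and lQ :: "'b \<Rightarrow> 'q \<Rightarrow> 'q" and rQ :: "'q \<Rightarrow> 'a \<Rightarrow> 'q"
    and mu :: "'p \<Rightarrow> 'q \<Rightarrow> 'a" and nu :: "'q \<Rightarrow> 'p \<Rightarrow> 'b"
    and gK :: "'g \<Rightarrow> 'k::ab_group_add set" and lK :: "'a \<Rightarrow> 'k \<Rightarrow> 'k"
    and gL :: "'g \<Rightarrow> 'l::ab_group_add set" and lL :: "'b \<Rightarrow> 'l \<Rightarrow> 'l"
    and tp1 :: "'p \<Rightarrow> ('p \<Rightarrow> 'k) \<Rightarrow> 't1::ab_group_add" and la1 :: "'a \<Rightarrow> 't1 \<Rightarrow> 't1"
    and tp2 :: "'b \<Rightarrow> 'l \<Rightarrow> 't2::ab_group_add" and lb2 :: "'b \<Rightarrow> 't2 \<Rightarrow> 't2"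
    and tp3 :: "'p \<Rightarrow> 'l \<Rightarrow> 't3::ab_group_add" and la3 :: "'a \<Rightarrow> 't3 \<Rightarrow> 't3"
  defines "BH \<equiv> span_act (hom_act rP) (HOM gP gK lP lK)"
    and "AH \<equiv> span_act (hom_act (\<lambda>x a. x * a)) (HOM gA gK (\<lambda>a x. a * x) lK)"
    and "BH2 \<equiv> span_act (hom_act rP) (HOM gP (tensor_grading gP gL tp3) lP la3)"
  assumes morita: "graded_morita_context gA gB gP gQ lP rP lQ rQ mu nu"
    and traces: "surjective_traces mu nu"
    and K: "graded_lmod gA gK lK" "lunital lK" "torsion_free lK"
    and L: "graded_lmod gB gL lL" "lunital lL" "torsion_free lL"
    \<comment> \<open>P (x)_B (B . HOM_A(P,K)) with its left A-module structure a(p (x) f) = ap (x) f\<close>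
    and T1: "is_tensor UNIV BH rP (hom_act rP) tp1"
      "\<forall>a p. \<forall>f\<in>BH. la1 a (tp1 p f) = tp1 (lP a p) f"
      "\<forall>a s t. la1 a (s + t) = la1 a s + la1 a t"
    \<comment> \<open>B (x)_B L with its left B-module structure b'(b (x) l) = b'b (x) l\<close>
    and T2: "is_tensor UNIV UNIV (\<lambda>x b. x * b) lL tp2"
      "\<forall>b' b l. lb2 b' (tp2 b l) = tp2 (b' * b) l"
      "\<forall>b s t. lb2 b (s + t) = lb2 b s + lb2 b t"
    \<comment> \<open>P (x)_B L with its left A-module structure a(p (x) l) = ap (x) l\<close>
    and T3: "is_tensor UNIV UNIV rP lL tp3"
      "\<forall>a p l. la3 a (tp3 p l) = tp3 (lP a p) l"
      "\<forall>a s t. la3 a (s + t) = la3 a s + la3 a t"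
  shows
    "(\<exists>\<phi> :: 't1 \<Rightarrow> ('a \<Rightarrow> 'k).
        (\<forall>p. \<forall>f\<in>BH. \<forall>x. \<phi> (tp1 p f) x = f (lP x p) \<and> f (lP x p) = lK x (f p)) \<and>
        (\<forall>s t. \<phi> (s + t) = \<phi> s + \<phi> t) \<and>
        (\<forall>a t. \<phi> (la1 a t) = hom_act (\<lambda>x a. x * a) a (\<phi> t)) \<and>
        (\<forall>s. \<phi> ` tensor_grading gP (\<lambda>b. BH \<inter> hom_deg gP gK lP lK b) tp1 s
               \<subseteq> AH \<inter> hom_deg gA gK (\<lambda>a x. a * x) lK (s * 1)) \<and>
        range \<phi> = AH \<and>
        (\<forall>t. \<phi> t = 0 \<longrightarrow> (\<forall>a. la1 a t = 0)))
     \<and>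
     (\<exists>\<gamma> :: 't2 \<Rightarrow> ('p \<Rightarrow> 't3).
        (\<forall>b l. \<gamma> (tp2 b l) = (\<lambda>p. tp3 (rP p b) l)) \<and>
        (\<forall>s t. \<gamma> (s + t) = \<gamma> s + \<gamma> t) \<and>
        (\<forall>b t. \<gamma> (lb2 b t) = hom_act rP b (\<gamma> t)) \<and>
        (\<forall>s. \<gamma> ` tensor_grading gB gL tp2 s
               \<subseteq> BH2 \<inter> hom_deg gP (tensor_grading gP gL tp3) lP la3 (s * 1)) \<and>
        range \<gamma> = BH2 \<and>
        (\<forall>t. \<gamma> t = 0 \<longrightarrow> (\<forall>b. lb2 b t = 0)))"
  proof -
  show ?thesis
    unfolding BH_def AH_def BH2_def
    by (rule conjI[OF part1[OF morita traces K(1) T1[unfolded BH_def]] part2[OF morita traces L(1) T2 T3]])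
qed

end
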